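(* Let $K$ be a definable, definably compact subset of $R^n$. There exists a definable, definably compact subset $E$ of $({}^*\mathbf R)^n$ contained in $A_{\mathrm r}^n$ such that the symmetric difference of $\overline E$ and $K$ has dimension $\le n-1$.
   Context: Notation: ${}^*\mathbf R$ is the ultrapower of $\mathbf R$ along a fixed non-principal ultrafilter on $\mathbf C$ converging to $0$, $t$ the class of $(t)_t$; $a\in{}^*\mathbf R$ is $t$-bounded if $|a|\le|t|^{-N}$ for some integer $N\ge0$ and $t$-negligible if $|a|\le|t|^N$ for all $N\ge0$; $A_{\mathrm r}$ is the ring of $t$-bounded elements, $\mathfrak m_{\mathrm r}$ its maximal ideal of $t$-negligible elements, $R=A_{\mathrm r}/\mathfrak m_{\mathrm r}$ (a real closed field), and $\overline E$ is the image of $E$ under the reduction map $A_{\mathrm r}^n\to R^n$. "Definable" means semi-algebraic over the relevant real closed field; definable compactness is in the sense of o-minimal geometry (for semi-algebraic subsets of affine space: closed and bounded). *)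

theory Defs
  imports Complex_Main "HOL-Analysis.Finite_Cartesian_Product"
begin

record 'a ostr =
  ocarrier :: "'a set"
  ozero :: 'a
  oone :: 'a
  oadd :: "'a \<Rightarrow> 'a \<Rightarrow> 'a"
  omul :: "'a \<Rightarrow> 'a \<Rightarrow> 'a"
  oless :: "'a \<Rightarrow> 'a \<Rightarrow> bool"

definition ospace :: "('a, 'b) ostr_scheme \<Rightarrow> ('a ^ 'n) set" where
  "ospace S = {x. \<forall>i. x $ i \<in> ocarrier S}"

inductive_set polyfun :: "('a, 'b) ostr_scheme \<Rightarrow> ('a ^ 'n \<Rightarrow> 'a) set"
  for S :: "('a, 'b) ostr_scheme" where
  pconst: "c \<in> ocarrier S \<Longrightarrow> (\<lambda>x. c) \<in> polyfun S"
| pcoord: "(\<lambda>x. x $ i) \<in> polyfun S"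
| padd: "p \<in> polyfun S \<Longrightarrow> q \<in> polyfun S \<Longrightarrow> (\<lambda>x. oadd S (p x) (q x)) \<in> polyfun S"
| pmul: "p \<in> polyfun S \<Longrightarrow> q \<in> polyfun S \<Longrightarrow> (\<lambda>x. omul S (p x) (q x)) \<in> polyfun S"

text \<open>Semi-algebraic (definable) subsets of S^n: Boolean combinations of sets {p > 0}.\<close>
inductive_set semialg :: "('a, 'b) ostr_scheme \<Rightarrow> ('a ^ 'n) set set"
  for S :: "('a, 'b) ostr_scheme" where
  sbasic: "p \<in> polyfun S \<Longrightarrow> {x \<in> ospace S. oless S (ozero S) (p x)} \<in> semialg S"
| scompl: "A \<in> semialg S \<Longrightarrow> ospace S - A \<in> semialg S"
| sinter: "A \<in> semialg S \<Longrightarrow> B \<in> semialg S \<Longrightarrow> A \<inter> B \<in> semialg S"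

text \<open>Closed in the product of order topologies.\<close>
definition oclosed :: "('a, 'b) ostr_scheme \<Rightarrow> ('a ^ 'n) set \<Rightarrow> bool" where
  "oclosed S A \<longleftrightarrow> A \<subseteq> ospace S \<and>
     (\<forall>x \<in> ospace S - A. \<exists>a b. a \<in> ospace S \<and> b \<in> ospace S \<and>
        (\<forall>i. oless S (a $ i) (x $ i) \<and> oless S (x $ i) (b $ i)) \<and>
        (\<forall>y \<in> A. \<not> (\<forall>i. oless S (a $ i) (y $ i) \<and> oless S (y $ i) (b $ i))))"

definition obounded :: "('a, 'b) ostr_scheme \<Rightarrow> ('a ^ 'n) set \<Rightarrow> bool" where
  "obounded S A \<longleftrightarrow> A \<subseteq> ospace S \<and>
     (\<exists>a \<in> ocarrier S. \<exists>b \<in> ocarrier S. \<forall>y \<in> A. \<forall>i. oless S a (y $ i) \<and> oless S (y $ i) b)"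

text \<open>Definably compact = closed and bounded (for semi-algebraic subsets of affine space).\<close>
definition def_compact :: "('a, 'b) ostr_scheme \<Rightarrow> ('a ^ 'n) set \<Rightarrow> bool" where
  "def_compact S A \<longleftrightarrow> A \<in> semialg S \<and> oclosed S A \<and> obounded S A"

definition proj_has_interior ::
    "('a, 'b) ostr_scheme \<Rightarrow> ('a ^ 'n) set \<Rightarrow> nat \<Rightarrow> (nat \<Rightarrow> 'n) \<Rightarrow> bool" where
  "proj_has_interior S A d \<sigma> \<longleftrightarrow>
     (\<exists>a b. (\<forall>j<d. a j \<in> ocarrier S \<and> b j \<in> ocarrier S \<and> oless S (a j) (b j)) \<and>
        (\<forall>y. (\<forall>j<d. y j \<in> ocarrier S \<and> oless S (a j) (y j) \<and> oless S (y j) (b j)) \<longrightarrow>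
              (\<exists>x \<in> A. \<forall>j<d. x $ (\<sigma> j) = y j)))"

text \<open>dim A \<le> k: no coordinate projection onto more than k coordinates has image with
  nonempty interior (the o-minimal dimension; dim of the empty set is -infinity).\<close>
definition dim_le :: "('a, 'b) ostr_scheme \<Rightarrow> ('a ^ 'n) set \<Rightarrow> nat \<Rightarrow> bool" where
  "dim_le S A k \<longleftrightarrow>
     (\<forall>d \<sigma>. k < d \<and> inj_on \<sigma> {..<d} \<longrightarrow> \<not> proj_has_interior S A d \<sigma>)"

definition is_ultrafilter :: "'a set set \<Rightarrow> bool" where
  "is_ultrafilter U \<longleftrightarrow> UNIV \<in> U \<and> {} \<notin> U \<and>
     (\<forall>A B. A \<in> U \<and> A \<subseteq> B \<longrightarrow> B \<in> U) \<and>
     (\<forall>A B. A \<in> U \<and> B \<in> U \<longrightarrow> A \<inter> B \<in> U) \<and>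
     (\<forall>A. A \<in> U \<or> - A \<in> U)"

definition nonprincipal :: "'a set set \<Rightarrow> bool" where
  "nonprincipal U \<longleftrightarrow> (\<forall>A. finite A \<longrightarrow> A \<notin> U)"

definition converges_to_0 :: "complex set set \<Rightarrow> bool" where
  "converges_to_0 U \<longleftrightarrow> (\<forall>e>0. {z. cmod z < e} \<in> U)"

text \<open>Elements of *R are equivalence classes of functions C \<Rightarrow> R modulo U.\<close>
type_synonym hstar = "(complex \<Rightarrow> real) set"

definition ueq :: "complex set set \<Rightarrow> ((complex \<Rightarrow> real) \<times> (complex \<Rightarrow> real)) set" where
  "ueq U = {(f, g). {z. f z = g z} \<in> U}"

definition hcls :: "complex set set \<Rightarrow> (complex \<Rightarrow> real) \<Rightarrow> hstar" where
  "hcls U f = ueq U `` {f}"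

definition hrep :: "hstar \<Rightarrow> (complex \<Rightarrow> real)" where
  "hrep a = (SOME f. f \<in> a)"

definition hstar_str :: "complex set set \<Rightarrow> hstar ostr" where
  "hstar_str U = \<lparr> ocarrier = UNIV // ueq U,
     ozero = hcls U (\<lambda>z. 0), oone = hcls U (\<lambda>z. 1),
     oadd = (\<lambda>a b. hcls U (\<lambda>z. hrep a z + hrep b z)),
     omul = (\<lambda>a b. hcls U (\<lambda>z. hrep a z * hrep b z)),
     oless = (\<lambda>a b. {z. hrep a z < hrep b z} \<in> U) \<rparr>"

definition tbounded :: "complex set set \<Rightarrow> hstar \<Rightarrow> bool" where
  "tbounded U a \<longleftrightarrow> (\<exists>N::nat. {z. \<bar>hrep a z\<bar> \<le> inverse (cmod z ^ N)} \<in> U)"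

definition tnegligible :: "complex set set \<Rightarrow> hstar \<Rightarrow> bool" where
  "tnegligible U a \<longleftrightarrow> (\<forall>N::nat. {z. \<bar>hrep a z\<bar> \<le> cmod z ^ N} \<in> U)"

definition Ar :: "complex set set \<Rightarrow> hstar set" where
  "Ar U = {a \<in> UNIV // ueq U. tbounded U a}"

text \<open>Congruence modulo the maximal ideal m_r of t-negligible elements.\<close>
definition req :: "complex set set \<Rightarrow> (hstar \<times> hstar) set" where
  "req U = {(a, b). a \<in> Ar U \<and> b \<in> Ar U \<and> tnegligible U (hcls U (\<lambda>z. hrep a z - hrep b z))}"

type_synonym rfield = "hstar set"

definition rcls :: "complex set set \<Rightarrow> hstar \<Rightarrow> rfield" where
  "rcls U a = req U `` {a}"

definition rrep :: "rfield \<Rightarrow> hstar" where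
  "rrep x = (SOME a. a \<in> x)"

text \<open>R = A_r / m_r with the induced ring operations and order.\<close>
definition R_str :: "complex set set \<Rightarrow> rfield ostr" where
  "R_str U = \<lparr> ocarrier = Ar U // req U,
     ozero = rcls U (ozero (hstar_str U)), oone = rcls U (oone (hstar_str U)),
     oadd = (\<lambda>x y. rcls U (oadd (hstar_str U) (rrep x) (rrep y))),
     omul = (\<lambda>x y. rcls U (omul (hstar_str U) (rrep x) (rrep y))),
     oless = (\<lambda>x y. x \<noteq> y \<and> oless (hstar_str U) (rrep x) (rrep y)) \<rparr>"

definition reduce_set :: "complex set set \<Rightarrow> (hstar ^ 'n) set \<Rightarrow> (rfield ^ 'n) set" where
  "reduce_set U E = (\<lambda>x. \<chi> i. rcls U (x $ i)) ` E"

end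

theory Submission
  imports Defs "HOL-Computational_Algebra.Polynomial"
begin


locale UF =
  fixes U :: "complex set set"
  assumes uf: "is_ultrafilter U" and np: "nonprincipal U" and c0: "converges_to_0 U"
begin

definition ae :: "(complex \<Rightarrow> bool) \<Rightarrow> bool" where
  "ae P \<longleftrightarrow> {z. P z} \<in> U"

lemma U_univ: "UNIV \<in> U" and U_empty: "{} \<notin> U"
  and U_mono: "A \<in> U \<Longrightarrow> A \<subseteq> B \<Longrightarrow> B \<in> U"
  and U_int: "A \<in> U \<Longrightarrow> B \<in> U \<Longrightarrow> A \<inter> B \<in> U"
  and U_compl: "A \<in> U \<or> - A \<in> U"
  using uf unfolding is_ultrafilter_def by blast+

lemma ae_mono: "ae P \<Longrightarrow> (\<And>z. P z \<Longrightarrow> Q z) \<Longrightarrow> ae Q"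
  unfolding ae_def by (erule U_mono) auto

lemma ae_conj: "ae P \<Longrightarrow> ae Q \<Longrightarrow> ae (\<lambda>z. P z \<and> Q z)"
proof -
  assume "ae P" "ae Q"
  then have "{z. P z} \<inter> {z. Q z} \<in> U" unfolding ae_def by (rule U_int)
  then show ?thesis unfolding ae_def by (simp add: Collect_conj_eq)
qed

lemma ae_mp: "ae P \<Longrightarrow> ae (\<lambda>z. P z \<longrightarrow> Q z) \<Longrightarrow> ae Q"
  by (drule (1) ae_conj) (erule ae_mono, auto)

lemma ae_True: "ae (\<lambda>z. True)"
  unfolding ae_def using U_univ by simp

lemma ae_False: "\<not> ae (\<lambda>z. False)"
  unfolding ae_def using U_empty by simp

lemma ae_not: "\<not> ae P \<Longrightarrow> ae (\<lambda>z. \<not> P z)"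
  unfolding ae_def using U_compl[of "{z. P z}"] by (simp add: Collect_neg_eq)

lemma ae_not_iff: "ae (\<lambda>z. \<not> P z) \<longleftrightarrow> \<not> ae P"
proof
  assume a: "ae (\<lambda>z. \<not> P z)"
  show "\<not> ae P"
  proof
    assume "ae P"
    from ae_conj[OF this a] have "ae (\<lambda>z. False)" by (rule ae_mono) auto
    then show False using ae_False by simp
  qed
qed (rule ae_not)

lemma ae_disj: "ae (\<lambda>z. P z \<or> Q z) \<Longrightarrow> ae P \<or> ae Q"
proof (rule ccontr)
  assume a: "ae (\<lambda>z. P z \<or> Q z)" and b: "\<not> (ae P \<or> ae Q)"
  then have "ae (\<lambda>z. \<not> P z)" "ae (\<lambda>z. \<not> Q z)" using ae_not by auto
  then have "ae (\<lambda>z. False)" using ae_conj[OF a ae_conj] by (auto intro: ae_mono)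
  then show False using ae_False by simp
qed

lemma ae_finite_all: "finite I \<Longrightarrow> (\<And>i. i \<in> I \<Longrightarrow> ae (P i)) \<Longrightarrow> ae (\<lambda>z. \<forall>i\<in>I. P i z)"
proof (induction I rule: finite_induct)
  case empty then show ?case using ae_True by simp
next
  case (insert x F)
  then have "ae (\<lambda>z. P x z \<and> (\<forall>i\<in>F. P i z))" by (intro ae_conj) auto
  then show ?case by (rule ae_mono) auto
qed

lemma ae_all: "(\<And>i::'n::finite. ae (P i)) \<Longrightarrow> ae (\<lambda>z. \<forall>i. P i z)"
  using ae_finite_all[of "UNIV::'n set" P] by simp

lemma ae_small: "e > 0 \<Longrightarrow> ae (\<lambda>z. cmod z < e)"
  using c0 unfolding converges_to_0_def ae_def by simp

lemma ae_nz: "ae (\<lambda>z. z \<noteq> 0)"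
proof -
  have "{0::complex} \<notin> U" using np unfolding nonprincipal_def by simp
  then have "\<not> ae (\<lambda>z. \<not> z \<noteq> 0)" unfolding ae_def by simp
  then show ?thesis using ae_not by blast
qed

lemma ae_r: "e > 0 \<Longrightarrow> ae (\<lambda>z. 0 < cmod z \<and> cmod z < e)"
  using ae_conj[OF ae_nz ae_small] by (rule ae_mono) auto

lemma ae_uniform_N:
  assumes "finite I" "\<And>i. i \<in> I \<Longrightarrow> \<exists>N::nat. ae (P i N)"
    and "\<And>i N M z. i \<in> I \<Longrightarrow> N \<le> M \<Longrightarrow> P i N z \<Longrightarrow> P i M z"
  shows "\<exists>N. \<forall>i\<in>I. ae (P i N)"
  using assms
proof (induction I rule: finite_induct)
  case empty then show ?case by simp
next
  case (insert x F)
  have "\<exists>N. \<forall>i\<in>F. ae (P i N)" by (rule insert.IH) (use insert.prems in auto)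
  then obtain N where N: "\<forall>i\<in>F. ae (P i N)" by auto
  obtain M where M: "ae (P x M)" using insert.prems by blast
  have "\<forall>i\<in>insert x F. ae (P i (max N M))"
  proof
    fix i assume i: "i \<in> insert x F"
    show "ae (P i (max N M))"
    proof (cases "i = x")
      case True then show ?thesis using M insert(5)[of i M "max N M"] i by (auto intro: ae_mono)
    next
      case False then show ?thesis using N insert(5)[of i N "max N M"] i by (auto intro: ae_mono)
    qed
  qed
  then show ?case by blast
qed

end


lemma rp_mono: "0 < (r::real) \<Longrightarrow> r \<le> 1 \<Longrightarrow> N \<le> M \<Longrightarrow> r ^ M \<le> r ^ N"
  by (simp add: power_decreasing)

lemma rp_inv_mono: "0 < (r::real) \<Longrightarrow> r \<le> 1 \<Longrightarrow> N \<le> M \<Longrightarrow> inverse (r ^ N) \<le> inverse (r ^ M)"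
  by (simp add: le_imp_inverse_le power_decreasing)

lemma rp_le1: "0 < (r::real) \<Longrightarrow> r \<le> 1 \<Longrightarrow> r ^ N \<le> 1"
  by (simp add: power_le_one)

lemma rp_inv_ge1: "0 < (r::real) \<Longrightarrow> r \<le> 1 \<Longrightarrow> 1 \<le> inverse (r ^ N)"
  by (simp add: one_le_inverse power_le_one)

lemma rp_double: "0 < (r::real) \<Longrightarrow> r \<le> 1/2 \<Longrightarrow> 2 * r ^ Suc N \<le> r ^ N"
proof -
  assume "0 < r" "r \<le> 1/2"
  then have "2 * r ^ Suc N = (2 * r) * r ^ N" by simp
  also have "\<dots> \<le> 1 * r ^ N" using \<open>0<r\<close> \<open>r \<le> 1/2\<close> by (intro mult_right_mono) auto
  finally show ?thesis by simp
qed

lemma rp_inv_double: "0 < (r::real) \<Longrightarrow> r \<le> 1/2 \<Longrightarrow> 2 * inverse (r ^ N) \<le> inverse (r ^ Suc N)"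
proof -
  assume a: "0 < r" "r \<le> 1/2"
  have "inverse (r ^ Suc N) = inverse r * inverse (r ^ N)" by (simp add: field_simps)
  moreover have "2 \<le> inverse r" using a by (simp add: field_simps)
  moreover have "0 \<le> inverse (r ^ N)" using a by simp
  ultimately show ?thesis by (simp add: mult_right_mono)
qed

context UF
begin

definition bnd :: "(complex \<Rightarrow> real) \<Rightarrow> bool" where
  "bnd f \<longleftrightarrow> (\<exists>N::nat. ae (\<lambda>z. \<bar>f z\<bar> \<le> inverse (cmod z ^ N)))"

definition negl :: "(complex \<Rightarrow> real) \<Rightarrow> bool" where
  "negl f \<longleftrightarrow> (\<forall>N::nat. ae (\<lambda>z. \<bar>f z\<bar> \<le> cmod z ^ N))"

definition pos :: "(complex \<Rightarrow> real) \<Rightarrow> bool" where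
  "pos f \<longleftrightarrow> (\<exists>N::nat. ae (\<lambda>z. cmod z ^ N < f z))"

lemma ae_r4: "ae (\<lambda>z. 0 < cmod z \<and> cmod z \<le> 1/4)"
  using ae_r[of "1/4"] by (rule ae_mono) auto

lemma bnd_le: "bnd f \<Longrightarrow> ae (\<lambda>z. \<bar>g z\<bar> \<le> \<bar>f z\<bar>) \<Longrightarrow> bnd g"
proof -
  assume "bnd f" and h: "ae (\<lambda>z. \<bar>g z\<bar> \<le> \<bar>f z\<bar>)"
  then obtain N where N: "ae (\<lambda>z. \<bar>f z\<bar> \<le> inverse (cmod z ^ N))" unfolding bnd_def by blast
  from ae_conj[OF N h] have "ae (\<lambda>z. \<bar>g z\<bar> \<le> inverse (cmod z ^ N))" by (rule ae_mono) auto
  then show ?thesis unfolding bnd_def by blast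
qed

lemma bnd_cong: "bnd f \<Longrightarrow> ae (\<lambda>z. g z = f z) \<Longrightarrow> bnd g"
  by (erule bnd_le) (erule ae_mono, simp)

lemma negl_le: "negl f \<Longrightarrow> ae (\<lambda>z. \<bar>g z\<bar> \<le> \<bar>f z\<bar>) \<Longrightarrow> negl g"
  unfolding negl_def
proof
  fix N assume "\<forall>N. ae (\<lambda>z. \<bar>f z\<bar> \<le> cmod z ^ N)" and h: "ae (\<lambda>z. \<bar>g z\<bar> \<le> \<bar>f z\<bar>)"
  then have N: "ae (\<lambda>z. \<bar>f z\<bar> \<le> cmod z ^ N)" by blast
  from ae_conj[OF N h] show "ae (\<lambda>z. \<bar>g z\<bar> \<le> cmod z ^ N)" by (rule ae_mono) auto
qed

lemma negl_cong: "negl f \<Longrightarrow> ae (\<lambda>z. g z = f z) \<Longrightarrow> negl g"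
  by (erule negl_le) (erule ae_mono, simp)

lemma bnd_const: "bnd (\<lambda>z. c)"
proof -
  have "ae (\<lambda>z. 0 < cmod z \<and> cmod z < 1 / (\<bar>c\<bar> + 1))"
    by (rule ae_r) (simp add: add_pos_nonneg)
  then have "ae (\<lambda>z. \<bar>c\<bar> \<le> inverse (cmod z ^ 1))"
  proof (rule ae_mono)
    fix z assume a: "0 < cmod z \<and> cmod z < 1 / (\<bar>c\<bar> + 1)"
    have p: "0 < \<bar>c\<bar> + 1" by simp
    have "cmod z * (\<bar>c\<bar> + 1) < 1" using a p by (simp add: pos_less_divide_eq)
    moreover have "cmod z * \<bar>c\<bar> \<le> cmod z * (\<bar>c\<bar> + 1)" using a by (intro mult_left_mono) auto
    ultimately have "\<bar>c\<bar> * cmod z \<le> 1" by (simp add: mult.commute)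
    moreover have "0 < cmod z" using a by simp
    ultimately have "\<bar>c\<bar> \<le> 1 / cmod z" by (simp add: pos_le_divide_eq)
    then show "\<bar>c\<bar> \<le> inverse (cmod z ^ 1)" by (simp add: divide_inverse)
  qed
  then show ?thesis unfolding bnd_def by blast
qed

lemma bnd_add: "bnd f \<Longrightarrow> bnd g \<Longrightarrow> bnd (\<lambda>z. f z + g z)"
proof -
  assume "bnd f" "bnd g"
  then obtain N M where N: "ae (\<lambda>z. \<bar>f z\<bar> \<le> inverse (cmod z ^ N))"
    and M: "ae (\<lambda>z. \<bar>g z\<bar> \<le> inverse (cmod z ^ M))" unfolding bnd_def by blast
  have "ae (\<lambda>z. \<bar>f z + g z\<bar> \<le> inverse (cmod z ^ Suc (max N M)))"
    using ae_conj[OF ae_r4 ae_conj[OF N M]]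
  proof (rule ae_mono)
    fix z assume a: "(0 < cmod z \<and> cmod z \<le> 1/4) \<and> \<bar>f z\<bar> \<le> inverse (cmod z ^ N) \<and> \<bar>g z\<bar> \<le> inverse (cmod z ^ M)"
    let ?r = "cmod z"
    have "inverse (?r ^ N) \<le> inverse (?r ^ max N M)" "inverse (?r ^ M) \<le> inverse (?r ^ max N M)"
      using a by (auto intro!: rp_inv_mono)
    moreover have "2 * inverse (?r ^ max N M) \<le> inverse (?r ^ Suc (max N M))"
      using a by (intro rp_inv_double) auto
    ultimately show "\<bar>f z + g z\<bar> \<le> inverse (?r ^ Suc (max N M))" using a by linarith
  qed
  then show ?thesis unfolding bnd_def by blast
qed

lemma bnd_mult: "bnd f \<Longrightarrow> bnd g \<Longrightarrow> bnd (\<lambda>z. f z * g z)"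
proof -
  assume "bnd f" "bnd g"
  then obtain N M where N: "ae (\<lambda>z. \<bar>f z\<bar> \<le> inverse (cmod z ^ N))"
    and M: "ae (\<lambda>z. \<bar>g z\<bar> \<le> inverse (cmod z ^ M))" unfolding bnd_def by blast
  have "ae (\<lambda>z. \<bar>f z * g z\<bar> \<le> inverse (cmod z ^ (N + M)))"
    using ae_conj[OF N M]
  proof (rule ae_mono)
    fix z assume a: "\<bar>f z\<bar> \<le> inverse (cmod z ^ N) \<and> \<bar>g z\<bar> \<le> inverse (cmod z ^ M)"
    then have "\<bar>f z\<bar> * \<bar>g z\<bar> \<le> inverse (cmod z ^ N) * inverse (cmod z ^ M)"
      by (intro mult_mono) auto
    then show "\<bar>f z * g z\<bar> \<le> inverse (cmod z ^ (N + M))"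
      by (simp add: abs_mult power_add)
  qed
  then show ?thesis unfolding bnd_def by blast
qed

lemma bnd_abs: "bnd f \<Longrightarrow> bnd (\<lambda>z. \<bar>f z\<bar>)"
  by (erule bnd_le) (simp add: ae_True)

lemma bnd_uminus: "bnd f \<Longrightarrow> bnd (\<lambda>z. - f z)"
  by (erule bnd_le) (simp add: ae_True)

lemma bnd_diff: "bnd f \<Longrightarrow> bnd g \<Longrightarrow> bnd (\<lambda>z. f z - g z)"
  using bnd_add[OF _ bnd_uminus, of f g] by simp

lemma bnd_sum: "finite I \<Longrightarrow> (\<And>i. i \<in> I \<Longrightarrow> bnd (f i)) \<Longrightarrow> bnd (\<lambda>z. \<Sum>i\<in>I. f i z)"
  by (induction I rule: finite_induct) (auto intro: bnd_add bnd_const)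

lemma bnd_power: "bnd f \<Longrightarrow> bnd (\<lambda>z. f z ^ k)"
  by (induction k) (auto intro: bnd_mult bnd_const)

lemma bnd_inv_rp: "bnd (\<lambda>z. inverse (cmod z ^ N))"
  unfolding bnd_def by (rule exI[of _ N]) (simp add: ae_True)

lemma bnd_rp: "bnd (\<lambda>z. cmod z ^ N)"
  using ae_r4 by (intro bnd_le[OF bnd_const[of 1]]) (auto elim!: ae_mono intro: rp_le1)

lemma negl_add: "negl f \<Longrightarrow> negl g \<Longrightarrow> negl (\<lambda>z. f z + g z)"
  unfolding negl_def
proof
  fix N assume N: "\<forall>N. ae (\<lambda>z. \<bar>f z\<bar> \<le> cmod z ^ N)" and M: "\<forall>N. ae (\<lambda>z. \<bar>g z\<bar> \<le> cmod z ^ N)"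
  show "ae (\<lambda>z. \<bar>f z + g z\<bar> \<le> cmod z ^ N)"
    using ae_conj[OF ae_r4 ae_conj[OF N[rule_format, of "Suc N"] M[rule_format, of "Suc N"]]]
  proof (rule ae_mono)
    fix z assume a: "(0 < cmod z \<and> cmod z \<le> 1/4) \<and> \<bar>f z\<bar> \<le> cmod z ^ Suc N \<and> \<bar>g z\<bar> \<le> cmod z ^ Suc N"
    have "2 * cmod z ^ Suc N \<le> cmod z ^ N" using a by (intro rp_double) auto
    then show "\<bar>f z + g z\<bar> \<le> cmod z ^ N" using a by linarith
  qed
qed

lemma negl_mult: "negl f \<Longrightarrow> bnd g \<Longrightarrow> negl (\<lambda>z. f z * g z)"
proof -
  assume f: "negl f" and "bnd g"
  then obtain M where M: "ae (\<lambda>z. \<bar>g z\<bar> \<le> inverse (cmod z ^ M))" unfolding bnd_def by blast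
  show ?thesis unfolding negl_def
  proof
    fix N
    show "ae (\<lambda>z. \<bar>f z * g z\<bar> \<le> cmod z ^ N)"
      using ae_conj[OF ae_r4 ae_conj[OF f[unfolded negl_def, rule_format, of "N + M"] M]]
    proof (rule ae_mono)
      fix z assume a: "(0 < cmod z \<and> cmod z \<le> 1/4) \<and> \<bar>f z\<bar> \<le> cmod z ^ (N + M) \<and> \<bar>g z\<bar> \<le> inverse (cmod z ^ M)"
      then have "\<bar>f z\<bar> * \<bar>g z\<bar> \<le> cmod z ^ (N + M) * inverse (cmod z ^ M)"
        by (intro mult_mono) auto
      also have "\<dots> = cmod z ^ N" using a by (simp add: power_add)
      finally show "\<bar>f z * g z\<bar> \<le> cmod z ^ N" by (simp add: abs_mult)
    qed
  qed
qed

lemma negl_mult': "bnd g \<Longrightarrow> negl f \<Longrightarrow> negl (\<lambda>z. g z * f z)"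
  using negl_mult[of f g] by (simp add: mult.commute)

lemma negl_uminus: "negl f \<Longrightarrow> negl (\<lambda>z. - f z)"
  by (erule negl_le) (simp add: ae_True)

lemma negl_abs: "negl f \<Longrightarrow> negl (\<lambda>z. \<bar>f z\<bar>)"
  by (erule negl_le) (simp add: ae_True)

lemma negl_diff: "negl f \<Longrightarrow> negl g \<Longrightarrow> negl (\<lambda>z. f z - g z)"
  using negl_add[OF _ negl_uminus, of f g] by simp

lemma negl_zero: "negl (\<lambda>z. 0)"
  unfolding negl_def by (simp add: ae_True)

lemma negl_sum: "finite I \<Longrightarrow> (\<And>i. i \<in> I \<Longrightarrow> negl (f i)) \<Longrightarrow> negl (\<lambda>z. \<Sum>i\<in>I. f i z)"
  by (induction I rule: finite_induct) (auto intro: negl_add negl_zero)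

lemma negl_bnd: "negl f \<Longrightarrow> bnd f"
proof -
  assume "negl f"
  then have "ae (\<lambda>z. \<bar>f z\<bar> \<le> cmod z ^ 0)" unfolding negl_def by blast
  then show ?thesis by (intro bnd_le[OF bnd_const[of 1]]) simp
qed

lemma negl_rp_mult: "negl f \<Longrightarrow> \<exists>M. ae (\<lambda>z. \<bar>f z\<bar> \<le> cmod z ^ N)"
  unfolding negl_def by blast

lemma not_negl: "\<not> negl f \<Longrightarrow> \<exists>N. ae (\<lambda>z. cmod z ^ N < \<bar>f z\<bar>)"
proof -
  assume "\<not> negl f"
  then obtain N where "\<not> ae (\<lambda>z. \<bar>f z\<bar> \<le> cmod z ^ N)" unfolding negl_def by blast
  then have "ae (\<lambda>z. \<not> \<bar>f z\<bar> \<le> cmod z ^ N)" by (rule ae_not)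
  then have "ae (\<lambda>z. cmod z ^ N < \<bar>f z\<bar>)" by (rule ae_mono) auto
  then show ?thesis by blast
qed

lemma not_neglI: "ae (\<lambda>z. cmod z ^ N < \<bar>f z\<bar>) \<Longrightarrow> \<not> negl f"
  unfolding negl_def
proof
  assume a: "ae (\<lambda>z. cmod z ^ N < \<bar>f z\<bar>)" and "\<forall>N. ae (\<lambda>z. \<bar>f z\<bar> \<le> cmod z ^ N)"
  then have "ae (\<lambda>z. \<bar>f z\<bar> \<le> cmod z ^ N)" by blast
  from ae_conj[OF a this] have "ae (\<lambda>z. False)" by (rule ae_mono) auto
  then show False using ae_False by simp
qed

lemma pos_not_negl: "pos f \<Longrightarrow> \<not> negl f"
proof -
  assume "pos f"
  then obtain N where N: "ae (\<lambda>z. cmod z ^ N < f z)" unfolding pos_def by blast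
  then have "ae (\<lambda>z. cmod z ^ N < \<bar>f z\<bar>)" by (rule ae_mono) auto
  then show ?thesis by (rule not_neglI)
qed

lemma pos_ae: "pos f \<Longrightarrow> ae (\<lambda>z. 0 < f z)"
proof -
  assume "pos f"
  then obtain N where "ae (\<lambda>z. cmod z ^ N < f z)" unfolding pos_def by blast
  then show ?thesis
  proof (rule ae_mono)
    fix z assume "cmod z ^ N < f z"
    moreover have "0 \<le> cmod z ^ N" by simp
    ultimately show "0 < f z" by linarith
  qed
qed

lemma pos_perturb: "pos f \<Longrightarrow> negl g \<Longrightarrow> pos (\<lambda>z. f z + g z)"
proof -
  assume "pos f" "negl g"
  then obtain N where N: "ae (\<lambda>z. cmod z ^ N < f z)" unfolding pos_def by blast
  have g: "ae (\<lambda>z. \<bar>g z\<bar> \<le> cmod z ^ Suc N)" using \<open>negl g\<close> unfolding negl_def by blast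
  have "ae (\<lambda>z. cmod z ^ Suc N < f z + g z)"
    using ae_conj[OF ae_r4 ae_conj[OF N g]]
  proof (rule ae_mono)
    fix z assume a: "(0 < cmod z \<and> cmod z \<le> 1/4) \<and> cmod z ^ N < f z \<and> \<bar>g z\<bar> \<le> cmod z ^ Suc N"
    have "2 * cmod z ^ Suc N \<le> cmod z ^ N" using a by (intro rp_double) auto
    then show "cmod z ^ Suc N < f z + g z" using a by linarith
  qed
  then show ?thesis unfolding pos_def by blast
qed

lemma pos_cong: "pos f \<Longrightarrow> negl (\<lambda>z. g z - f z) \<Longrightarrow> pos g"
  using pos_perturb[of f "\<lambda>z. g z - f z"] by simp

lemma pos_iff: "\<not> negl f \<Longrightarrow> pos f \<longleftrightarrow> ae (\<lambda>z. 0 < f z)"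
proof
  assume "\<not> negl f" "ae (\<lambda>z. 0 < f z)"
  then obtain N where "ae (\<lambda>z. cmod z ^ N < \<bar>f z\<bar>)" using not_negl by blast
  from ae_conj[OF this \<open>ae (\<lambda>z. 0 < f z)\<close>] have "ae (\<lambda>z. cmod z ^ N < f z)"
    by (rule ae_mono) auto
  then show "pos f" unfolding pos_def by blast
qed (rule pos_ae)

lemma pos_rp: "pos (\<lambda>z. cmod z ^ N)"
proof -
  have "ae (\<lambda>z. cmod z ^ Suc N < cmod z ^ N)"
    using ae_r4
  proof (rule ae_mono)
    fix z :: complex assume a: "0 < cmod z \<and> cmod z \<le> 1/4"
    have "2 * cmod z ^ Suc N \<le> cmod z ^ N" using a by (intro rp_double) auto
    moreover have "0 < cmod z ^ Suc N" using a by simp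
    ultimately show "cmod z ^ Suc N < cmod z ^ N" by linarith
  qed
  then show ?thesis unfolding pos_def by blast
qed

lemma pos_add: "pos f \<Longrightarrow> pos g \<Longrightarrow> pos (\<lambda>z. f z + g z)"
proof -
  assume "pos f" "pos g"
  then obtain N M where N: "ae (\<lambda>z. cmod z ^ N < f z)" and M: "ae (\<lambda>z. cmod z ^ M < g z)"
    unfolding pos_def by blast
  have "ae (\<lambda>z. cmod z ^ N < f z + g z)" using ae_conj[OF ae_r4 ae_conj[OF N M]]
  proof (rule ae_mono)
    fix z assume "(0 < cmod z \<and> cmod z \<le> 1/4) \<and> cmod z ^ N < f z \<and> cmod z ^ M < g z"
    moreover have "0 \<le> cmod z ^ M" by simp
    ultimately show "cmod z ^ N < f z + g z" by linarith
  qed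
  then show ?thesis unfolding pos_def by blast
qed

lemma pos_mono: "pos f \<Longrightarrow> ae (\<lambda>z. f z \<le> g z) \<Longrightarrow> pos g"
proof -
  assume "pos f" and h: "ae (\<lambda>z. f z \<le> g z)"
  then obtain N where N: "ae (\<lambda>z. cmod z ^ N < f z)" unfolding pos_def by blast
  from ae_conj[OF N h] have "ae (\<lambda>z. cmod z ^ N < g z)" by (rule ae_mono) auto
  then show ?thesis unfolding pos_def by blast
qed

end


context UF
begin

abbreviation "HS \<equiv> hstar_str U"
abbreviation "RS \<equiv> R_str U"

lemma equiv_ueq: "equiv UNIV (ueq U)"
proof (rule equivI)
  show "refl (ueq U)" unfolding refl_on_def ueq_def using U_univ by auto
  show "ueq U \<subseteq> UNIV \<times> UNIV" by simp
  show "sym (ueq U)" unfolding sym_def ueq_def by (auto simp: eq_commute)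
  show "trans (ueq U)" unfolding trans_def ueq_def
  proof (clarsimp)
    fix f g h assume "{z. f z = g z} \<in> U" "{z. g z = h z} \<in> U"
    then have "{z. f z = g z} \<inter> {z. g z = h z} \<in> U" by (rule U_int)
    then show "{z. f z = h z} \<in> U" by (rule U_mono) auto
  qed
qed

lemma ueq_iff: "(f, g) \<in> ueq U \<longleftrightarrow> ae (\<lambda>z. f z = g z)"
  unfolding ueq_def ae_def by simp

lemma hcls_eq: "hcls U f = hcls U g \<longleftrightarrow> ae (\<lambda>z. f z = g z)"
  unfolding hcls_def using eq_equiv_class_iff[OF equiv_ueq, of f g] ueq_iff by simp

lemma hrep_hcls: "ae (\<lambda>z. hrep (hcls U f) z = f z)"
proof -
  have "f \<in> hcls U f" unfolding hcls_def using equiv_class_self[OF equiv_ueq, of f] by simp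
  then have "hrep (hcls U f) \<in> hcls U f" unfolding hrep_def by (rule someI[where P="\<lambda>g. g \<in> hcls U f"])
  then have "(f, hrep (hcls U f)) \<in> ueq U" unfolding hcls_def by simp
  then show ?thesis unfolding ueq_iff by (rule ae_mono) simp
qed

lemma hcls_hrep: "a \<in> UNIV // ueq U \<Longrightarrow> hcls U (hrep a) = a"
proof -
  assume "a \<in> UNIV // ueq U"
  then obtain f where a: "a = hcls U f" unfolding quotient_def hcls_def by blast
  show ?thesis unfolding a hcls_eq by (rule hrep_hcls)
qed

lemma hcar: "ocarrier HS = UNIV // ueq U"
  by (simp add: hstar_str_def)

lemma hcls_in: "hcls U f \<in> UNIV // ueq U"
  unfolding hcls_def quotient_def by blast

lemma hcar_cases: "a \<in> UNIV // ueq U \<Longrightarrow> \<exists>f. a = hcls U f"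
  using hcls_hrep by metis

lemma h_ops:
  "ozero HS = hcls U (\<lambda>z. 0)" "oone HS = hcls U (\<lambda>z. 1)"
  "oadd HS a b = hcls U (\<lambda>z. hrep a z + hrep b z)"
  "omul HS a b = hcls U (\<lambda>z. hrep a z * hrep b z)"
  "oless HS a b \<longleftrightarrow> ae (\<lambda>z. hrep a z < hrep b z)"
  by (simp_all add: hstar_str_def ae_def)

lemma ae_iff_cong: "ae (\<lambda>z. P z \<longleftrightarrow> Q z) \<Longrightarrow> ae P \<longleftrightarrow> ae Q"
proof
  assume h: "ae (\<lambda>z. P z \<longleftrightarrow> Q z)"
  { assume "ae P" then show "ae Q" using h by (rule ae_mp[OF _ ae_mono]) blast }
  { assume "ae Q" then show "ae P" using h by (rule ae_mp[OF _ ae_mono]) blast }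
qed

lemma hless_hcls: "oless HS (hcls U f) (hcls U g) \<longleftrightarrow> ae (\<lambda>z. f z < g z)"
proof -
  have "ae (\<lambda>z. hrep (hcls U f) z = f z \<and> hrep (hcls U g) z = g z)"
    by (rule ae_conj[OF hrep_hcls hrep_hcls])
  then have "ae (\<lambda>z. hrep (hcls U f) z < hrep (hcls U g) z \<longleftrightarrow> f z < g z)"
    by (rule ae_mono) auto
  then show ?thesis unfolding h_ops by (rule ae_iff_cong)
qed

lemma tbounded_iff: "tbounded U a \<longleftrightarrow> bnd (hrep a)"
  unfolding tbounded_def bnd_def ae_def by simp

lemma tnegligible_iff: "tnegligible U a \<longleftrightarrow> negl (hrep a)"
  unfolding tnegligible_def negl_def ae_def by simp

lemma bnd_ae_iff: "ae (\<lambda>z. f z = g z) \<Longrightarrow> bnd f \<longleftrightarrow> bnd g"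
proof
  assume h: "ae (\<lambda>z. f z = g z)"
  { assume "bnd g" then show "bnd f" using h by (rule bnd_cong) }
  { assume "bnd f" moreover have "ae (\<lambda>z. g z = f z)" using h by (rule ae_mono) simp
    ultimately show "bnd g" by (rule bnd_cong) }
qed

lemma negl_ae_iff: "ae (\<lambda>z. f z = g z) \<Longrightarrow> negl f \<longleftrightarrow> negl g"
proof
  assume h: "ae (\<lambda>z. f z = g z)"
  { assume "negl g" then show "negl f" using h by (rule negl_cong) }
  { assume "negl f" moreover have "ae (\<lambda>z. g z = f z)" using h by (rule ae_mono) simp
    ultimately show "negl g" by (rule negl_cong) }
qed

lemma hcls_Ar: "hcls U f \<in> Ar U \<longleftrightarrow> bnd f"
  unfolding Ar_def using hcls_in tbounded_iff bnd_ae_iff[OF hrep_hcls] by simp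

lemma Ar_cases: "a \<in> Ar U \<Longrightarrow> a = hcls U (hrep a) \<and> bnd (hrep a)"
  unfolding Ar_def using hcls_hrep tbounded_iff by auto

lemma req_iff: "(a, b) \<in> req U \<longleftrightarrow> a \<in> Ar U \<and> b \<in> Ar U \<and> negl (\<lambda>z. hrep a z - hrep b z)"
  unfolding req_def using tnegligible_iff negl_ae_iff[OF hrep_hcls] by simp

lemma equiv_req: "equiv (Ar U) (req U)"
proof (rule equivI)
  show "refl_on (Ar U) (req U)" unfolding refl_on_def
    by (auto simp: req_iff negl_zero)
  show "req U \<subseteq> Ar U \<times> Ar U" by (auto simp: req_iff)
  show "sym (req U)" unfolding sym_def req_iff
  proof (intro allI impI, elim conjE, intro conjI)
    fix a b assume "negl (\<lambda>z. hrep a z - hrep b z)"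
    from negl_uminus[OF this] show "negl (\<lambda>z. hrep b z - hrep a z)" by simp
  qed
  show "trans (req U)" unfolding trans_def req_iff
  proof (intro allI impI, elim conjE, intro conjI)
    fix a b c assume "negl (\<lambda>z. hrep a z - hrep b z)" "negl (\<lambda>z. hrep b z - hrep c z)"
    from negl_add[OF this] show "negl (\<lambda>z. hrep a z - hrep c z)" by simp
  qed
qed

definition ev :: "(complex \<Rightarrow> real) \<Rightarrow> rfield" where
  "ev f = rcls U (hcls U f)"

definition rr :: "rfield \<Rightarrow> complex \<Rightarrow> real" where
  "rr x = hrep (rrep x)"

lemma rcar: "ocarrier RS = Ar U // req U"
  by (simp add: R_str_def)

lemma ev_eq: "bnd f \<Longrightarrow> bnd g \<Longrightarrow> ev f = ev g \<longleftrightarrow> negl (\<lambda>z. f z - g z)"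
proof -
  assume f: "bnd f" and g: "bnd g"
  have "ev f = ev g \<longleftrightarrow> (hcls U f, hcls U g) \<in> req U"
    unfolding ev_def rcls_def using eq_equiv_class_iff[OF equiv_req] f g hcls_Ar by blast
  also have "\<dots> \<longleftrightarrow> negl (\<lambda>z. hrep (hcls U f) z - hrep (hcls U g) z)"
    using f g hcls_Ar req_iff by simp
  also have "\<dots> \<longleftrightarrow> negl (\<lambda>z. f z - g z)"
    by (rule negl_ae_iff) (rule ae_mono[OF ae_conj[OF hrep_hcls[of f] hrep_hcls[of g]]], simp)
  finally show ?thesis .
qed

lemma ev_in: "bnd f \<Longrightarrow> ev f \<in> ocarrier RS"
  unfolding rcar ev_def rcls_def using hcls_Ar by (simp add: quotientI)

lemma rcar_cases: "x \<in> ocarrier RS \<Longrightarrow> bnd (rr x) \<and> x = ev (rr x)"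
proof -
  assume "x \<in> ocarrier RS"
  then obtain a where a: "a \<in> Ar U" "x = req U `` {a}" unfolding rcar quotient_def by blast
  then have "a \<in> x" using equiv_class_self[OF equiv_req a(1)] by simp
  then have "rrep x \<in> x" unfolding rrep_def by (rule someI[where P="\<lambda>g. g \<in> x"])
  then have "(a, rrep x) \<in> req U" using a by simp
  then have r: "rrep x \<in> Ar U" by (simp add: req_iff)
  have eq: "x = req U `` {rrep x}"
    using a equiv_class_eq[OF equiv_req \<open>(a, rrep x) \<in> req U\<close>] by simp
  from Ar_cases[OF r] have "rrep x = hcls U (rr x)" "bnd (rr x)" unfolding rr_def by auto
  then show ?thesis using eq unfolding ev_def rcls_def by simp
qed

lemma rr_bnd: "x \<in> ocarrier RS \<Longrightarrow> bnd (rr x)"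
  using rcar_cases by blast

lemma ev_rr: "x \<in> ocarrier RS \<Longrightarrow> ev (rr x) = x"
  using rcar_cases by metis

lemma rr_ev: "bnd f \<Longrightarrow> negl (\<lambda>z. rr (ev f) z - f z)"
proof -
  assume f: "bnd f"
  then have "ev f \<in> ocarrier RS" by (rule ev_in)
  then have "ev (rr (ev f)) = ev f" "bnd (rr (ev f))" using rcar_cases by metis+
  then show ?thesis using ev_eq f by blast
qed

lemma r_ops:
  "ozero RS = ev (\<lambda>z. 0)" "oone RS = ev (\<lambda>z. 1)"
  "oadd RS x y = ev (\<lambda>z. rr x z + rr y z)"
  "omul RS x y = ev (\<lambda>z. rr x z * rr y z)"
  "oless RS x y \<longleftrightarrow> x \<noteq> y \<and> ae (\<lambda>z. rr x z < rr y z)"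
  by (simp_all add: R_str_def hstar_str_def ev_def rr_def ae_def)

lemma rless_iff: "x \<in> ocarrier RS \<Longrightarrow> y \<in> ocarrier RS \<Longrightarrow>
    oless RS x y \<longleftrightarrow> pos (\<lambda>z. rr y z - rr x z)"
proof -
  assume x: "x \<in> ocarrier RS" and y: "y \<in> ocarrier RS"
  have hx: "bnd (rr x)" and hy: "bnd (rr y)" using x y rr_bnd by auto
  have "x = y \<longleftrightarrow> negl (\<lambda>z. rr y z - rr x z)"
    using ev_eq[OF hy hx] ev_rr[OF x] ev_rr[OF y] by auto
  moreover have "ae (\<lambda>z. rr x z < rr y z) \<longleftrightarrow> ae (\<lambda>z. 0 < rr y z - rr x z)"
    by (simp add: algebra_simps)
  ultimately show ?thesis unfolding r_ops using pos_iff pos_not_negl by blast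
qed

lemma rless_ev: "bnd f \<Longrightarrow> bnd g \<Longrightarrow> oless RS (ev f) (ev g) \<longleftrightarrow> pos (\<lambda>z. g z - f z)"
proof -
  assume f: "bnd f" and g: "bnd g"
  have n: "negl (\<lambda>z. (rr (ev g) z - rr (ev f) z) - (g z - f z))"
    using negl_diff[OF rr_ev[OF g] rr_ev[OF f]] by (simp add: algebra_simps)
  have n2: "negl (\<lambda>z. (g z - f z) - (rr (ev g) z - rr (ev f) z))"
    using negl_uminus[OF n] by (simp add: algebra_simps)
  show ?thesis using rless_iff[OF ev_in[OF f] ev_in[OF g]] pos_cong[OF _ n] pos_cong[OF _ n2] by blast
qed

definition red :: "hstar ^ 'n \<Rightarrow> rfield ^ 'n" where
  "red x = (\<chi> i. rcls U (x $ i))"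

lemma reduce_red: "reduce_set U E = red ` E"
  unfolding reduce_set_def red_def by simp

lemma rcls_Ar: "a \<in> Ar U \<Longrightarrow> rcls U a = ev (hrep a)"
  using Ar_cases unfolding ev_def by metis

end


datatype ('c, 'n) pexp = PC 'c | PV 'n | PA "('c, 'n) pexp" "('c, 'n) pexp"
  | PM "('c, 'n) pexp" "('c, 'n) pexp"

datatype ('c, 'n) fm = FB "('c, 'n) pexp" | FC "('c, 'n) fm" | FI "('c, 'n) fm" "('c, 'n) fm"

primrec pcs :: "('c, 'n) pexp \<Rightarrow> 'c set" where
  "pcs (PC c) = {c}"
| "pcs (PV i) = {}"
| "pcs (PA p q) = pcs p \<union> pcs q"
| "pcs (PM p q) = pcs p \<union> pcs q"

primrec cmap :: "('c \<Rightarrow> 'd) \<Rightarrow> ('c, 'n) pexp \<Rightarrow> ('d, 'n) pexp" where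
  "cmap g (PC c) = PC (g c)"
| "cmap g (PV i) = PV i"
| "cmap g (PA p q) = PA (cmap g p) (cmap g q)"
| "cmap g (PM p q) = PM (cmap g p) (cmap g q)"

primrec evalS :: "('a, 'b) ostr_scheme \<Rightarrow> ('a, 'n) pexp \<Rightarrow> 'a ^ 'n \<Rightarrow> 'a" where
  "evalS S (PC c) x = c"
| "evalS S (PV i) x = x $ i"
| "evalS S (PA p q) x = oadd S (evalS S p x) (evalS S q x)"
| "evalS S (PM p q) x = omul S (evalS S p x) (evalS S q x)"

primrec reval :: "(real, 'n) pexp \<Rightarrow> ('n \<Rightarrow> real) \<Rightarrow> real" where
  "reval (PC c) x = c"
| "reval (PV i) x = x i"
| "reval (PA p q) x = reval p x + reval q x"
| "reval (PM p q) x = reval p x * reval q x"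

primrec sem :: "('a, 'b) ostr_scheme \<Rightarrow> ('a, 'n) fm \<Rightarrow> ('a ^ 'n) set" where
  "sem S (FB e) = {x \<in> ospace S. oless S (ozero S) (evalS S e x)}"
| "sem S (FC f) = ospace S - sem S f"
| "sem S (FI f g) = sem S f \<inter> sem S g"

primrec fpolys :: "('c, 'n) fm \<Rightarrow> ('c, 'n) pexp list" where
  "fpolys (FB e) = [e]"
| "fpolys (FC f) = fpolys f"
| "fpolys (FI f g) = fpolys f @ fpolys g"

primrec pdeg :: "('c, 'n) pexp \<Rightarrow> nat" where
  "pdeg (PC c) = 0"
| "pdeg (PV i) = 1"
| "pdeg (PA p q) = max (pdeg p) (pdeg q)"
| "pdeg (PM p q) = pdeg p + pdeg q"

definition fok :: "('a, 'b) ostr_scheme \<Rightarrow> ('a, 'n) fm \<Rightarrow> bool" where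
  "fok S f \<longleftrightarrow> (\<forall>e \<in> set (fpolys f). pcs e \<subseteq> ocarrier S)"

lemma pdeg_map[simp]: "pdeg (cmap g e) = pdeg e"
  by (induction e) auto

lemma polyfun_rep: "f \<in> polyfun S \<Longrightarrow> \<exists>e. pcs e \<subseteq> ocarrier S \<and> f = evalS S e"
proof (induction rule: polyfun.induct)
  case (pconst c) then show ?case by (intro exI[of _ "PC c"]) auto
next
  case (pcoord i) then show ?case by (intro exI[of _ "PV i"]) auto
next
  case (padd p q)
  then obtain e1 e2 where "pcs e1 \<subseteq> ocarrier S" "p = evalS S e1"
    "pcs e2 \<subseteq> ocarrier S" "q = evalS S e2" by blast
  then show ?case by (intro exI[of _ "PA e1 e2"]) auto
next
  case (pmul p q)
  then obtain e1 e2 where "pcs e1 \<subseteq> ocarrier S" "p = evalS S e1"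
    "pcs e2 \<subseteq> ocarrier S" "q = evalS S e2" by blast
  then show ?case by (intro exI[of _ "PM e1 e2"]) auto
qed

lemma evalS_polyfun: "pcs e \<subseteq> ocarrier S \<Longrightarrow> evalS S e \<in> polyfun S"
proof (induction e)
  case (PC c) then show ?case using polyfun.pconst[of c S] by simp
next
  case (PV i) then show ?case using polyfun.pcoord by simp
next
  case (PA p q) then show ?case using polyfun.padd[of "evalS S p" S "evalS S q"] by simp
next
  case (PM p q) then show ?case using polyfun.pmul[of "evalS S p" S "evalS S q"] by simp
qed

lemma semialg_rep: "A \<in> semialg S \<Longrightarrow> \<exists>f. fok S f \<and> A = sem S f"
proof (induction rule: semialg.induct)
  case (sbasic p)
  then obtain e where "pcs e \<subseteq> ocarrier S" "p = evalS S e" using polyfun_rep by blast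
  then show ?case by (intro exI[of _ "FB e"]) (auto simp: fok_def)
next
  case (scompl A)
  then obtain f where "fok S f" "A = sem S f" by blast
  then show ?case by (intro exI[of _ "FC f"]) (auto simp: fok_def)
next
  case (sinter A B)
  then obtain f g where "fok S f" "A = sem S f" "fok S g" "B = sem S g" by blast
  then show ?case by (intro exI[of _ "FI f g"]) (auto simp: fok_def)
qed

lemma sem_sub: "sem S f \<subseteq> ospace S"
  by (induction f) auto

primrec vb :: "(real, 'n) pexp \<Rightarrow> real \<Rightarrow> real" where
  "vb (PC c) M = \<bar>c\<bar>"
| "vb (PV i) M = M"
| "vb (PA p q) M = vb p M + vb q M"
| "vb (PM p q) M = vb p M * vb q M"

primrec lb :: "(real, 'n) pexp \<Rightarrow> real \<Rightarrow> real" where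
  "lb (PC c) M = 0"
| "lb (PV i) M = 1"
| "lb (PA p q) M = lb p M + lb q M"
| "lb (PM p q) M = lb p M * vb q M + vb p M * lb q M"

lemma vb_nonneg: "0 \<le> M \<Longrightarrow> 0 \<le> vb e M"
  by (induction e) auto

lemma lb_nonneg: "0 \<le> M \<Longrightarrow> 0 \<le> lb e M"
  by (induction e) (auto intro!: add_nonneg_nonneg mult_nonneg_nonneg vb_nonneg)

lemma reval_bound: "(\<And>i. \<bar>X i\<bar> \<le> M) \<Longrightarrow> \<bar>reval e X\<bar> \<le> vb e M"
proof (induction e)
  case (PA p q) then show ?case by (simp add: abs_triangle_ineq order_trans[OF abs_triangle_ineq add_mono])
next
  case (PM p q) then show ?case by (simp add: abs_mult mult_mono)
qed auto

lemma reval_lip: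
  assumes "\<And>i. \<bar>X i\<bar> \<le> M" "\<And>i. \<bar>Y i\<bar> \<le> M" "\<And>i. \<bar>X i - Y i\<bar> \<le> d"
  shows "\<bar>reval e X - reval e Y\<bar> \<le> lb e M * d"
proof (induction e)
  case (PC c) then show ?case by simp
next
  case (PV i) then show ?case using assms by simp
next
  case (PA p q)
  have "\<bar>reval (PA p q) X - reval (PA p q) Y\<bar> \<le> \<bar>reval p X - reval p Y\<bar> + \<bar>reval q X - reval q Y\<bar>"
    by simp
  also have "\<dots> \<le> lb p M * d + lb q M * d" using PA by (rule add_mono)
  finally show ?case by (simp add: algebra_simps)
next
  case (PM p q)
  have M: "0 \<le> M" using assms(1) by (meson abs_ge_zero order_trans)
  have "reval (PM p q) X - reval (PM p q) Y = (reval p X - reval p Y) * reval q X + reval p Y * (reval q X - reval q Y)"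
    by (simp add: algebra_simps)
  then have "\<bar>reval (PM p q) X - reval (PM p q) Y\<bar> \<le> \<bar>reval p X - reval p Y\<bar> * \<bar>reval q X\<bar> + \<bar>reval p Y\<bar> * \<bar>reval q X - reval q Y\<bar>"
    by (metis abs_mult abs_triangle_ineq)
  also have "\<dots> \<le> (lb p M * d) * vb q M + vb p M * (lb q M * d)"
  proof -
    have d: "0 \<le> d" using assms(3) by (meson abs_ge_zero order_trans)
    have "\<bar>reval q X\<bar> \<le> vb q M" by (rule reval_bound[where e=q, OF assms(1)])
    moreover have "\<bar>reval p Y\<bar> \<le> vb p M" by (rule reval_bound[where e=p, OF assms(2)])
    moreover have "0 \<le> lb p M * d" using lb_nonneg[OF M, of p] d by simp
    moreover have "0 \<le> vb p M" using vb_nonneg[OF M, of p] by simp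
    ultimately show ?thesis using PM by (intro add_mono mult_mono) auto
  qed
  finally show ?case by (simp add: algebra_simps)
qed

context UF
begin

lemma evalS_HS:
  assumes "pcs e \<subseteq> ocarrier HS" "x \<in> ospace HS"
  shows "evalS HS e x = hcls U (\<lambda>z. reval (cmap (\<lambda>c. hrep c z) e) (\<lambda>i. hrep (x $ i) z))"
  using assms(1)
proof (induction e)
  case (PC c) then show ?case using hcls_hrep by (simp add: hcar)
next
  case (PV i) then show ?case using hcls_hrep assms(2) by (simp add: hcar ospace_def)
next
  case (PA p q)
  let ?F = "\<lambda>z. reval (cmap (\<lambda>c. hrep c z) p) (\<lambda>i. hrep (x $ i) z)"
  let ?G = "\<lambda>z. reval (cmap (\<lambda>c. hrep c z) q) (\<lambda>i. hrep (x $ i) z)"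
  from PA show ?case
    by (simp add: h_ops hcls_eq) (rule ae_mono[OF ae_conj[OF hrep_hcls[of ?F] hrep_hcls[of ?G]]], simp)
next
  case (PM p q)
  let ?F = "\<lambda>z. reval (cmap (\<lambda>c. hrep c z) p) (\<lambda>i. hrep (x $ i) z)"
  let ?G = "\<lambda>z. reval (cmap (\<lambda>c. hrep c z) q) (\<lambda>i. hrep (x $ i) z)"
  from PM show ?case
    by (simp add: h_ops hcls_eq) (rule ae_mono[OF ae_conj[OF hrep_hcls[of ?F] hrep_hcls[of ?G]]], simp)
qed

lemma evalS_RS:
  assumes "pcs e \<subseteq> ocarrier RS" "\<And>i. y $ i = ev (Y i)" "\<And>i. bnd (Y i)"
  shows "evalS RS e y = ev (\<lambda>z. reval (cmap (\<lambda>c. rr c z) e) (\<lambda>i. Y i z))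
     \<and> bnd (\<lambda>z. reval (cmap (\<lambda>c. rr c z) e) (\<lambda>i. Y i z))"
  using assms(1)
proof (induction e)
  case (PC c) then show ?case using rcar_cases by auto
next
  case (PV i) then show ?case using assms by simp
next
  case (PA p q)
  let ?F = "\<lambda>z. reval (cmap (\<lambda>c. rr c z) p) (\<lambda>i. Y i z)"
  let ?G = "\<lambda>z. reval (cmap (\<lambda>c. rr c z) q) (\<lambda>i. Y i z)"
  from PA have F: "evalS RS p y = ev ?F" "bnd ?F" and G: "evalS RS q y = ev ?G" "bnd ?G" by auto
  have b1: "bnd (rr (ev ?F))" "bnd (rr (ev ?G))" using F G ev_in rr_bnd by auto
  have "negl (\<lambda>z. (rr (ev ?F) z + rr (ev ?G) z) - (?F z + ?G z))"
    using negl_add[OF rr_ev[OF F(2)] rr_ev[OF G(2)]] by (simp add: algebra_simps)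
  then have "ev (\<lambda>z. rr (ev ?F) z + rr (ev ?G) z) = ev (\<lambda>z. ?F z + ?G z)"
    using ev_eq bnd_add b1 F G by blast
  then show ?case using F G bnd_add[OF F(2) G(2)] by (simp add: r_ops)
next
  case (PM p q)
  let ?F = "\<lambda>z. reval (cmap (\<lambda>c. rr c z) p) (\<lambda>i. Y i z)"
  let ?G = "\<lambda>z. reval (cmap (\<lambda>c. rr c z) q) (\<lambda>i. Y i z)"
  from PM have F: "evalS RS p y = ev ?F" "bnd ?F" and G: "evalS RS q y = ev ?G" "bnd ?G" by auto
  have b1: "bnd (rr (ev ?F))" "bnd (rr (ev ?G))" using F G ev_in rr_bnd by auto
  have "negl (\<lambda>z. (rr (ev ?F) z - ?F z) * rr (ev ?G) z + ?F z * (rr (ev ?G) z - ?G z))"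
    by (intro negl_add negl_mult negl_mult' rr_ev F G b1)
  then have "negl (\<lambda>z. (rr (ev ?F) z * rr (ev ?G) z) - (?F z * ?G z))"
    by (simp add: algebra_simps)
  then have "ev (\<lambda>z. rr (ev ?F) z * rr (ev ?G) z) = ev (\<lambda>z. ?F z * ?G z)"
    using ev_eq bnd_mult b1 F G by blast
  then show ?case using F G bnd_mult[OF F(2) G(2)] by (simp add: r_ops)
qed

lemma bnd_vb: "pcs e \<subseteq> ocarrier RS \<Longrightarrow> bnd M \<Longrightarrow> bnd (\<lambda>z. vb (cmap (\<lambda>c. rr c z) e) (M z))"
  by (induction e) (auto intro: bnd_add bnd_mult bnd_abs rr_bnd)

lemma bnd_lb: "pcs e \<subseteq> ocarrier RS \<Longrightarrow> bnd M \<Longrightarrow> bnd (\<lambda>z. lb (cmap (\<lambda>c. rr c z) e) (M z))"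
  by (induction e) (auto intro!: bnd_add bnd_mult bnd_vb bnd_const)

end


primrec poly_of :: "(real, 'n) pexp \<Rightarrow> 'n \<Rightarrow> ('n \<Rightarrow> real) \<Rightarrow> real poly" where
  "poly_of (PC c) i Y = [:c:]"
| "poly_of (PV j) i Y = (if j = i then [:0, 1:] else [:Y j:])"
| "poly_of (PA p q) i Y = poly_of p i Y + poly_of q i Y"
| "poly_of (PM p q) i Y = poly_of p i Y * poly_of q i Y"

lemma poly_poly_of: "poly (poly_of e i Y) s = reval e (Y(i := s))"
  by (induction e) auto

lemma degree_poly_of: "degree (poly_of e i Y) \<le> pdeg e"
proof (induction e)
  case (PA p q) then show ?case
    using order_trans[OF degree_add_le_max max.mono[OF PA.IH]] by simp
next
  case (PM p q) then show ?case
    using order_trans[OF degree_mult_le add_mono[OF PM.IH]] by simp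
qed auto

definition lag :: "(nat \<Rightarrow> real) \<Rightarrow> nat \<Rightarrow> nat \<Rightarrow> real poly" where
  "lag s D k = (\<Prod>j\<in>{..D} - {k}. smult (inverse (s k - s j)) [:- s j, 1:])"

lemma poly_lag: "poly (lag s D k) x = (\<Prod>j\<in>{..D} - {k}. (x - s j) / (s k - s j))"
  unfolding lag_def poly_prod by (rule prod.cong) (simp_all add: divide_inverse algebra_simps)

lemma degree_lag: "k \<le> D \<Longrightarrow> degree (lag s D k) \<le> D"
proof -
  assume that: "k \<le> D"
  have "degree (lag s D k) \<le> sum (degree \<circ> (\<lambda>j. smult (inverse (s k - s j)) [:- s j, 1:])) ({..D} - {k})"
    unfolding lag_def by (rule degree_prod_sum_le) simp
  also have "\<dots> \<le> (\<Sum>j\<in>{..D} - {k}. 1)"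
  proof (rule sum_mono)
    fix j
    have "degree (smult (inverse (s k - s j)) [:- s j, 1:]) \<le> degree [:- s j, 1:]"
      by (rule degree_smult_le)
    then show "(degree \<circ> (\<lambda>j. smult (inverse (s k - s j)) [:- s j, 1:])) j \<le> 1" by simp
  qed
  also have "\<dots> \<le> D" using that by simp
  finally show ?thesis .
qed

lemma lagrange_interp:
  fixes q :: "real poly" and s :: "nat \<Rightarrow> real"
  assumes deg: "degree q \<le> D" and inj: "inj_on s {..D}"
  shows "poly q w = (\<Sum>k\<le>D. poly q (s k) * poly (lag s D k) w)"
proof -
  define L where "L = (\<Sum>k\<le>D. smult (poly q (s k)) (lag s D k))"
  have lag1: "poly (lag s D k) (s m) = (if m = k then 1 else 0)" if "k \<le> D" "m \<le> D" for k m
  proof (cases "m = k")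
    case True
    have "\<And>j. j \<in> {..D} - {k} \<Longrightarrow> (s k - s j) / (s k - s j) = 1"
      using inj that by (auto simp: inj_on_def)
    then show ?thesis unfolding poly_lag using True by simp
  next
    case False
    then have "m \<in> {..D} - {k}" using that by auto
    then show ?thesis unfolding poly_lag using False by (simp add: prod_zero_iff) (rule bexI[of _ m], auto)
  qed
  have "q = L"
  proof (rule poly_eqI_degree[of "s ` {..D}"])
    fix x assume "x \<in> s ` {..D}"
    then obtain m where m: "m \<le> D" "x = s m" by auto
    have "poly L x = (\<Sum>k\<le>D. poly q (s k) * (if m = k then 1 else 0))"
      unfolding L_def poly_sum using m lag1 by (intro sum.cong) auto
    also have "\<dots> = (\<Sum>k\<le>D. if m = k then poly q (s k) else 0)" by (intro sum.cong) auto
    also have "\<dots> = poly q x" using m by (simp add: sum.delta)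
    finally show "poly q x = poly L x" by simp
  next
    have c: "card (s ` {..D}) = Suc D" using inj by (simp add: card_image)
    show "degree q < card (s ` {..D})" using deg c by simp
    have "degree L \<le> D" unfolding L_def
      by (intro degree_sum_le) (auto intro: order_trans[OF degree_smult_le] degree_lag)
    then show "degree L < card (s ` {..D})" using c by simp
  qed
  then have "poly q w = poly L w" by simp
  also have "\<dots> = (\<Sum>k\<le>D. poly q (s k) * poly (lag s D k) w)" unfolding L_def poly_sum by simp
  finally show ?thesis .
qed

lemma lagrange_bound:
  fixes q :: "real poly" and s :: "nat \<Rightarrow> real"
  assumes deg: "degree q \<le> D"
    and sep: "\<And>k m. k \<le> D \<Longrightarrow> m \<le> D \<Longrightarrow> k \<noteq> m \<Longrightarrow> h \<le> \<bar>s k - s m\<bar>"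
    and h: "0 < h" and sb: "\<And>k. k \<le> D \<Longrightarrow> \<bar>s k\<bar> \<le> M" and w: "\<bar>w\<bar> \<le> M"
  shows "\<bar>poly q w\<bar> \<le> (\<Sum>k\<le>D. \<bar>poly q (s k)\<bar>) * (2 * M / h) ^ D"
proof -
  have inj: "inj_on s {..D}"
  proof (rule inj_onI, rule ccontr)
    fix k m assume "k \<in> {..D}" "m \<in> {..D}" "s k = s m" "k \<noteq> m"
    then have "h \<le> \<bar>s k - s m\<bar>" using sep[of k m] by auto
    then show False using h \<open>s k = s m\<close> by simp
  qed
  have M: "0 \<le> M" using w by (meson abs_ge_zero order_trans)
  have lb: "\<bar>poly (lag s D k) w\<bar> \<le> (2 * M / h) ^ D" if k: "k \<le> D" for k
  proof -
    have "\<bar>poly (lag s D k) w\<bar> = (\<Prod>j\<in>{..D} - {k}. \<bar>w - s j\<bar> / \<bar>s k - s j\<bar>)"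
      unfolding poly_lag by (simp add: abs_prod abs_divide)
    also have "\<dots> \<le> (\<Prod>j\<in>{..D} - {k}. 2 * M / h)"
    proof (rule prod_mono)
      fix j assume j: "j \<in> {..D} - {k}"
      have sj: "\<bar>s j\<bar> \<le> M" using sb[of j] j by simp
      have a: "\<bar>w - s j\<bar> \<le> 2 * M" using w sj by linarith
      have b: "h \<le> \<bar>s k - s j\<bar>" using sep[of k j] j k by simp
      have "\<bar>w - s j\<bar> / \<bar>s k - s j\<bar> \<le> 2 * M / h"
        by (rule frac_le) (use a b h M in simp_all)
      then show "0 \<le> \<bar>w - s j\<bar> / \<bar>s k - s j\<bar> \<and> \<bar>w - s j\<bar> / \<bar>s k - s j\<bar> \<le> 2 * M / h"
        by simp
    qed
    also have "\<dots> = (2 * M / h) ^ D" using k by simp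
    finally show ?thesis .
  qed
  have "\<bar>poly q w\<bar> = \<bar>\<Sum>k\<le>D. poly q (s k) * poly (lag s D k) w\<bar>"
    by (rule arg_cong[where f=abs], rule lagrange_interp[OF deg inj])
  also have "\<dots> \<le> (\<Sum>k\<le>D. \<bar>poly q (s k)\<bar> * \<bar>poly (lag s D k) w\<bar>)"
    by (rule order_trans[OF sum_abs]) (simp add: abs_mult)
  also have "\<dots> \<le> (\<Sum>k\<le>D. \<bar>poly q (s k)\<bar> * (2 * M / h) ^ D)"
    by (rule sum_mono, rule mult_left_mono) (simp_all add: lb)
  also have "\<dots> = (\<Sum>k\<le>D. \<bar>poly q (s k)\<bar>) * (2 * M / h) ^ D"
    by (simp add: sum_distrib_right)
  finally show ?thesis .
qed


context UF
begin

lemma pos_cmult: "0 < c \<Longrightarrow> pos f \<Longrightarrow> pos (\<lambda>z. c * f z)"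
proof -
  assume c: "0 < c" and "pos f"
  then obtain N where N: "ae (\<lambda>z. cmod z ^ N < f z)" unfolding pos_def by blast
  have h: "ae (\<lambda>z. (0 < cmod z \<and> cmod z < min c 1) \<and> cmod z ^ N < f z)"
    using ae_conj[OF ae_r[of "min c 1"] N] c by simp
  have "ae (\<lambda>z. cmod z ^ Suc N < c * f z)"
    using h
  proof (rule ae_mono)
    fix z assume a: "(0 < cmod z \<and> cmod z < min c 1) \<and> cmod z ^ N < f z"
    have "cmod z ^ Suc N = cmod z * cmod z ^ N" by simp
    also have "\<dots> \<le> c * cmod z ^ N" using a by (intro mult_right_mono) auto
    also have "\<dots> < c * f z" using a c by simp
    finally show "cmod z ^ Suc N < c * f z" .
  qed
  then show ?thesis unfolding pos_def by blast
qed

definition G :: "(rfield, 'n) pexp \<Rightarrow> rfield ^ 'n \<Rightarrow> complex \<Rightarrow> real" where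
  "G e y z = reval (cmap (\<lambda>c. rr c z) e) (\<lambda>i. rr (y $ i) z)"

lemma ospaceR: "y \<in> ospace RS \<Longrightarrow> y $ i \<in> ocarrier RS"
  unfolding ospace_def by simp

lemma evR: "pcs e \<subseteq> ocarrier RS \<Longrightarrow> y \<in> ospace RS \<Longrightarrow> evalS RS e y = ev (G e y) \<and> bnd (G e y)"
  unfolding G_def by (rule evalS_RS) (auto simp: ev_rr rr_bnd ospaceR)

lemma evR_zero: "pcs e \<subseteq> ocarrier RS \<Longrightarrow> y \<in> ospace RS \<Longrightarrow> evalS RS e y = ozero RS \<longleftrightarrow> negl (G e y)"
  using evR[of e y] ev_eq[of "G e y" "\<lambda>z. 0"] bnd_const by (simp add: r_ops)

lemma mid_between:
  assumes a: "a \<in> ocarrier RS" and b: "b \<in> ocarrier RS" and ab: "oless RS a b"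
    and t: "0 < t" "t < 1"
  shows "ev (\<lambda>z. rr a z + t * (rr b z - rr a z)) \<in> ocarrier RS
    \<and> oless RS a (ev (\<lambda>z. rr a z + t * (rr b z - rr a z)))
    \<and> oless RS (ev (\<lambda>z. rr a z + t * (rr b z - rr a z))) b"
proof -
  have ba: "bnd (rr a)" "bnd (rr b)" using a b rr_bnd by auto
  have bm: "bnd (\<lambda>z. rr a z + t * (rr b z - rr a z))"
    by (intro bnd_add bnd_mult bnd_const bnd_diff ba)
  have p: "pos (\<lambda>z. rr b z - rr a z)" using rless_iff a b ab by blast
  have "pos (\<lambda>z. (rr a z + t * (rr b z - rr a z)) - rr a z)"
    using pos_cmult[OF t(1) p] by simp
  moreover have "pos (\<lambda>z. rr b z - (rr a z + t * (rr b z - rr a z)))"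
    using pos_cmult[OF _ p, of "1 - t"] t by (simp add: algebra_simps)
  ultimately show ?thesis
    using rless_ev[OF ba(1) bm] rless_ev[OF bm ba(2)] ev_rr[OF a] ev_rr[OF b] ev_in[OF bm] by simp
qed

end


lemma spacing:
  fixes r A B uk um :: real and k m D N :: nat
  assumes r: "0 < r" "r \<le> 1/4" "r * (real D + 2) \<le> 1" and BA: "r ^ N < B - A"
    and uk: "\<bar>uk - (A + (real k + 1) / (real D + 2) * (B - A))\<bar> \<le> r ^ (N + 3)"
    and um: "\<bar>um - (A + (real m + 1) / (real D + 2) * (B - A))\<bar> \<le> r ^ (N + 3)"
    and km: "k \<noteq> m"
  shows "r ^ (N + 2) \<le> \<bar>uk - um\<bar>"
proof -
  have D2: "0 < real D + 2" by simp
  have BA0: "0 < B - A" using BA r by (smt (verit) zero_less_power)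
  have km1: "1 \<le> \<bar>real k - real m\<bar>" using km by (cases "k < m") auto
  have e1: "(real k + 1) / (real D + 2) * (B - A) - (real m + 1) / (real D + 2) * (B - A)
      = (real k - real m) * ((B - A) / (real D + 2))" by (simp add: divide_inverse algebra_simps)
  have e2: "\<bar>(real k - real m) * ((B - A) / (real D + 2))\<bar> \<ge> (B - A) / (real D + 2)"
  proof -
    have p: "0 \<le> (B - A) / (real D + 2)" using BA0 D2 by simp
    have "1 * ((B - A) / (real D + 2)) \<le> \<bar>real k - real m\<bar> * ((B - A) / (real D + 2))"
      by (rule mult_right_mono[OF km1 p])
    then show ?thesis using p BA0 by (simp add: abs_mult)
  qed
  have e3: "r ^ (N + 1) \<le> (B - A) / (real D + 2)"
  proof -
    have "r ^ (N + 1) * (real D + 2) = r ^ N * (r * (real D + 2))" by (simp add: algebra_simps)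
    also have "\<dots> \<le> r ^ N * 1" using r by (intro mult_left_mono) auto
    also have "\<dots> < B - A" using BA by simp
    finally show ?thesis using D2 by (simp add: pos_le_divide_eq)
  qed
  have e4: "r ^ (N + 2) + 2 * r ^ (N + 3) \<le> r ^ (N + 1)"
  proof -
    have "r ^ (N + 2) + 2 * r ^ (N + 3) = r ^ (N + 1) * (r + 2 * r * r)" by (simp add: algebra_simps power_add power3_eq_cube power2_eq_square)
    also have "\<dots> \<le> r ^ (N + 1) * 1"
    proof (intro mult_left_mono)
      have "r * r \<le> (1/4) * (1/4)" using r by (intro mult_mono) auto
      then show "r + 2 * r * r \<le> 1" using r by simp
    qed (use r in simp)
    finally show ?thesis by simp
  qed
  define X where "X = uk - (A + (real k + 1) / (real D + 2) * (B - A))"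
  define Y where "Y = um - (A + (real m + 1) / (real D + 2) * (B - A))"
  define Q where "Q = (real k - real m) * ((B - A) / (real D + 2))"
  have eq: "uk - um = X - Y + Q" unfolding X_def Y_def Q_def using e1 by linarith
  have "\<bar>X\<bar> \<le> r ^ (N + 3)" "\<bar>Y\<bar> \<le> r ^ (N + 3)" "r ^ (N + 2) + 2 * r ^ (N + 3) \<le> \<bar>Q\<bar>"
    using uk um e2 e3 e4 unfolding X_def Y_def Q_def by linarith+
  then show ?thesis unfolding eq by linarith
qed

context UF
begin

lemma G_upd: "G e (\<chi> j. if j = i then c else y $ j) z = reval (cmap (\<lambda>c. rr c z) e) ((\<lambda>j. rr (y $ j) z)(i := rr c z))"
  unfolding G_def by (rule arg_cong[where f="reval _"]) (auto simp: fun_eq_iff)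

lemma G_poly: "G e y z = poly (poly_of (cmap (\<lambda>c. rr c z) e) i (\<lambda>j. rr (y $ j) z)) (rr (y $ i) z)"
proof -
  have "(\<lambda>j. rr (y $ j) z)(i := rr (y $ i) z) = (\<lambda>j. rr (y $ j) z)" by (rule ext) simp
  then show ?thesis unfolding G_def poly_poly_of by simp
qed

lemma G_poly_upd: "G e (\<chi> j. if j = i then c else y $ j) z = poly (poly_of (cmap (\<lambda>c. rr c z) e) i (\<lambda>j. rr (y $ j) z)) (rr c z)"
  unfolding G_upd poly_poly_of by simp

lemma ospace_upd: "y \<in> ospace RS \<Longrightarrow> c \<in> ocarrier RS \<Longrightarrow> (\<chi> j. if j = i then c else y $ j) \<in> ospace RS"
  unfolding ospace_def by auto

lemma identity_step:
  fixes e :: "(rfield, 'n::finite) pexp"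
  assumes ce: "pcs e \<subseteq> ocarrier RS" and y: "y \<in> ospace RS"
    and a: "a \<in> ocarrier RS" and b: "b \<in> ocarrier RS" and ab: "oless RS a b"
    and Z: "\<And>c. c \<in> ocarrier RS \<Longrightarrow> oless RS a c \<Longrightarrow> oless RS c b \<Longrightarrow>
       evalS RS e (\<chi> j. if j = i then c else y $ j) = ozero RS"
  shows "evalS RS e y = ozero RS"
proof -
  define A where "A = rr a"
  define B where "B = rr b"
  have bA: "bnd A" and bB: "bnd B" using a b rr_bnd unfolding A_def B_def by auto
  have "pos (\<lambda>z. B z - A z)" using rless_iff a b ab unfolding A_def B_def by blast
  then obtain N where N: "ae (\<lambda>z. cmod z ^ N < B z - A z)" unfolding pos_def by blast
  define D where "D = pdeg e"
  define t where "t k = (real k + 1) / (real D + 2)" for k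
  define S where "S k z = A z + t k * (B z - A z)" for k z
  define s where "s k = ev (S k)" for k
  have bS: "bnd (S k)" for k unfolding S_def by (intro bnd_add bnd_mult bnd_const bnd_diff bA bB)
  have sk: "s k \<in> ocarrier RS \<and> oless RS a (s k) \<and> oless RS (s k) b" if "k \<le> D" for k
  proof -
    have "0 < t k" "t k < 1" using that unfolding t_def by (auto simp: field_simps)
    from mid_between[OF a b ab this] show ?thesis
      unfolding s_def S_def A_def B_def by (simp add: algebra_simps)
  qed
  have zk: "negl (G e (\<chi> j. if j = i then s k else y $ j))" if "k \<le> D" for k
    using Z[of "s k"] sk[OF that] evR_zero[OF ce ospace_upd[OF y]] by blast
  have negS: "ae (\<lambda>z. \<forall>k\<in>{..D}. \<bar>rr (s k) z - S k z\<bar> \<le> cmod z ^ (N + 3))"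
    by (rule ae_finite_all) (use rr_ev[OF bS] in \<open>auto simp: s_def negl_def\<close>)
  define Mz where "Mz z = \<bar>rr (y $ i) z\<bar> + (\<Sum>k\<le>D. \<bar>rr (s k) z\<bar>)" for z
  define F where "F z = (\<Sum>k\<le>D. \<bar>G e (\<chi> j. if j = i then s k else y $ j) z\<bar>) * (2 * Mz z / cmod z ^ (N + 2)) ^ D" for z
  have bM: "bnd Mz" unfolding Mz_def
    by (intro bnd_add bnd_abs bnd_sum) (auto intro: rr_bnd ospaceR[OF y] conjunct1[OF sk])
  have nF: "negl F" unfolding F_def
  proof (rule negl_mult)
    show "negl (\<lambda>z. \<Sum>k\<le>D. \<bar>G e (\<chi> j. if j = i then s k else y $ j) z\<bar>)"
      by (intro negl_sum negl_abs zk) auto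
    show "bnd (\<lambda>z. (2 * Mz z / cmod z ^ (N + 2)) ^ D)"
      unfolding divide_inverse by (intro bnd_power bnd_mult bnd_const bM bnd_inv_rp)
  qed
  have "ae (\<lambda>z. ((0 < cmod z \<and> cmod z \<le> 1/4) \<and> cmod z < 1 / (real D + 2)) \<and>
       (cmod z ^ N < B z - A z \<and> (\<forall>k\<in>{..D}. \<bar>rr (s k) z - S k z\<bar> \<le> cmod z ^ (N + 3))))"
    using ae_conj[OF ae_conj[OF ae_r4 ae_small[of "1 / (real D + 2)", OF divide_pos_pos[OF zero_less_one, of "real D + 2"]]] ae_conj[OF N negS]]
    by simp
  then have "ae (\<lambda>z. \<bar>G e y z\<bar> \<le> \<bar>F z\<bar>)"
  proof (rule ae_mono)
    fix z assume H: "((0 < cmod z \<and> cmod z \<le> 1/4) \<and> cmod z < 1 / (real D + 2)) \<and>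
       (cmod z ^ N < B z - A z \<and> (\<forall>k\<in>{..D}. \<bar>rr (s k) z - S k z\<bar> \<le> cmod z ^ (N + 3)))"
    let ?r = "cmod z"
    let ?q = "poly_of (cmap (\<lambda>c. rr c z) e) i (\<lambda>j. rr (y $ j) z)"
    have r3: "?r * (real D + 2) \<le> 1" using H by (simp add: field_simps)
    have "\<bar>poly ?q (rr (y $ i) z)\<bar> \<le> (\<Sum>k\<le>D. \<bar>poly ?q (rr (s k) z)\<bar>) * (2 * Mz z / ?r ^ (N + 2)) ^ D"
    proof (rule lagrange_bound)
      show "degree ?q \<le> D" unfolding D_def using degree_poly_of[of "cmap (\<lambda>c. rr c z) e"] by simp
      show "0 < ?r ^ (N + 2)" using H by simp
      fix k m assume km: "k \<le> D" "m \<le> D" "k \<noteq> m"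
      show "?r ^ (N + 2) \<le> \<bar>rr (s k) z - rr (s m) z\<bar>"
        by (rule spacing[of ?r D N "B z" "A z" _ k _ m]) (use H r3 km in \<open>auto simp: S_def t_def\<close>)
    next
      fix k assume "k \<le> D"
      then show "\<bar>rr (s k) z\<bar> \<le> Mz z" unfolding Mz_def
        using member_le_sum[of k "{..D}" "\<lambda>k. \<bar>rr (s k) z\<bar>"] by simp
    next
      show "\<bar>rr (y $ i) z\<bar> \<le> Mz z" unfolding Mz_def by (simp add: sum_nonneg)
    qed
    then show "\<bar>G e y z\<bar> \<le> \<bar>F z\<bar>" unfolding F_def
      using G_poly[of e y z i] G_poly_upd[of e i _ y z] by simp
  qed
  then have "negl (G e y)" using nF negl_le by blast
  then show ?thesis using evR_zero[OF ce y] by simp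
qed

lemma identity:
  fixes e :: "(rfield, 'n::finite) pexp"
  assumes ce: "pcs e \<subseteq> ocarrier RS"
    and ab: "\<And>i. \<alpha> i \<in> ocarrier RS" "\<And>i. \<beta> i \<in> ocarrier RS" "\<And>i. oless RS (\<alpha> i) (\<beta> i)"
    and Z: "\<And>y. y \<in> ospace RS \<Longrightarrow> (\<forall>i. oless RS (\<alpha> i) (y $ i) \<and> oless RS (y $ i) (\<beta> i)) \<Longrightarrow>
       evalS RS e y = ozero RS"
  shows "y \<in> ospace RS \<Longrightarrow> evalS RS e y = ozero RS"
proof -
  have "finite J \<Longrightarrow> \<forall>y\<in>ospace RS. (\<forall>i. i \<notin> J \<longrightarrow> oless RS (\<alpha> i) (y $ i) \<and> oless RS (y $ i) (\<beta> i))
      \<longrightarrow> evalS RS e y = ozero RS" for J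
  proof (induction J rule: finite_induct)
    case empty then show ?case using Z by auto
  next
    case (insert i J)
    show ?case
    proof (intro ballI impI)
      fix y assume y: "y \<in> ospace RS"
        and H: "\<forall>j. j \<notin> insert i J \<longrightarrow> oless RS (\<alpha> j) (y $ j) \<and> oless RS (y $ j) (\<beta> j)"
      show "evalS RS e y = ozero RS"
      proof (rule identity_step[OF ce y ab(1)[of i] ab(2)[of i] ab(3)[of i]])
        fix c assume c: "c \<in> ocarrier RS" "oless RS (\<alpha> i) c" "oless RS c (\<beta> i)"
        show "evalS RS e (\<chi> j. if j = i then c else y $ j) = ozero RS"
          using insert.IH ospace_upd[OF y c(1), of i] H c by auto
      qed
    qed
  qed
  then show "y \<in> ospace RS \<Longrightarrow> evalS RS e y = ozero RS" by (metis finite_class.finite_UNIV UNIV_I)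
qed

end


lemma rp_facts:
  fixes r :: real
  assumes r: "0 < r" "r \<le> 1/4" and m: "m = N + K + N1 + 3"
  shows "2 * r ^ m \<le> 1" "r ^ Suc N1 + 2 * r ^ m \<le> r ^ N1"
    "inverse (r ^ K) * (2 * r ^ m) \<le> r ^ Suc N" "r ^ Suc N + r ^ Suc N \<le> r ^ N"
proof -
  have r1: "r \<le> 1" "r \<le> 1/2" using r by auto
  have a: "r ^ m \<le> r ^ 1" using r1 r m by (intro rp_mono) auto
  then show "2 * r ^ m \<le> 1" using r by simp
  have b: "r ^ m \<le> r ^ Suc (Suc N1)" using r1 r m by (intro rp_mono) auto
  have c: "2 * r ^ Suc (Suc N1) \<le> r ^ Suc N1" using r1 r by (intro rp_double) auto
  have d: "2 * r ^ Suc N1 \<le> r ^ N1" using r1 r by (intro rp_double) auto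
  show "r ^ Suc N1 + 2 * r ^ m \<le> r ^ N1" using b c d by linarith
  have "inverse (r ^ K) * r ^ m = r ^ (N + N1 + 3)"
    using r m by (simp add: power_add field_simps)
  also have "\<dots> \<le> r ^ Suc (Suc N)" using r1 r by (intro rp_mono) auto
  finally have e: "inverse (r ^ K) * r ^ m \<le> r ^ Suc (Suc N)" .
  have f: "2 * r ^ Suc (Suc N) \<le> r ^ Suc N" using r1 r by (intro rp_double) auto
  show "inverse (r ^ K) * (2 * r ^ m) \<le> r ^ Suc N" using e f by simp
  have "2 * r ^ Suc N \<le> r ^ N" using r1 r by (intro rp_double) auto
  then show "r ^ Suc N + r ^ Suc N \<le> r ^ N" by simp
qed

context UF
begin

lemma negl_ae_le: "negl f \<Longrightarrow> ae (\<lambda>z. \<bar>f z\<bar> \<le> cmod z ^ m)"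
  unfolding negl_def by blast

lemma cont:
  fixes e :: "(rfield, 'n::finite) pexp"
  assumes ce: "pcs e \<subseteq> ocarrier RS" and y0: "y0 \<in> ospace RS"
    and nz: "evalS RS e y0 \<noteq> ozero RS"
    and a: "\<And>i. \<alpha> i \<in> ocarrier RS" and b: "\<And>i. \<beta> i \<in> ocarrier RS"
    and ay: "\<And>i. oless RS (\<alpha> i) (y0 $ i)" and yb: "\<And>i. oless RS (y0 $ i) (\<beta> i)"
  shows "\<exists>\<alpha>' \<beta>'. (\<forall>i. \<alpha>' i \<in> ocarrier RS \<and> \<beta>' i \<in> ocarrier RS \<and> oless RS (\<alpha>' i) (\<beta>' i)) \<and>
    (\<forall>y\<in>ospace RS. (\<forall>i. oless RS (\<alpha>' i) (y $ i) \<and> oless RS (y $ i) (\<beta>' i)) \<longrightarrow>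
        evalS RS e y \<noteq> ozero RS \<and> (\<forall>i. oless RS (\<alpha> i) (y $ i) \<and> oless RS (y $ i) (\<beta> i)))"
proof -
  define Y0 where "Y0 i = rr (y0 $ i)" for i
  have bY0: "bnd (Y0 i)" for i unfolding Y0_def using rr_bnd ospaceR[OF y0] by blast
  have "\<not> negl (G e y0)" using evR_zero[OF ce y0] nz by simp
  then obtain N where N: "ae (\<lambda>z. cmod z ^ N < \<bar>G e y0 z\<bar>)" using not_negl by blast
  define Mz where "Mz z = (\<Sum>i\<in>UNIV. \<bar>Y0 i z\<bar>) + 1" for z
  have bM: "bnd Mz" unfolding Mz_def by (intro bnd_add bnd_sum bnd_abs bnd_const bY0) auto
  define L where "L z = lb (cmap (\<lambda>c. rr c z) e) (Mz z)" for z
  have "bnd L" unfolding L_def by (rule bnd_lb[OF ce bM])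
  then obtain K where K: "ae (\<lambda>z. \<bar>L z\<bar> \<le> inverse (cmod z ^ K))" unfolding bnd_def by blast
  define P where "P i N1 z = (cmod z \<le> 1 \<longrightarrow> cmod z ^ N1 < Y0 i z - rr (\<alpha> i) z \<and> cmod z ^ N1 < rr (\<beta> i) z - Y0 i z)"
    for i N1 z
  have "\<exists>N1. \<forall>i\<in>UNIV. ae (P i N1)"
  proof (rule ae_uniform_N)
    fix i :: 'n
    have "pos (\<lambda>z. Y0 i z - rr (\<alpha> i) z)" using rless_iff[OF a ospaceR[OF y0]] ay unfolding Y0_def by blast
    then obtain Na where Na: "ae (\<lambda>z. cmod z ^ Na < Y0 i z - rr (\<alpha> i) z)" unfolding pos_def by blast
    have "pos (\<lambda>z. rr (\<beta> i) z - Y0 i z)" using rless_iff[OF ospaceR[OF y0] b] yb unfolding Y0_def by blast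
    then obtain Nb where Nb: "ae (\<lambda>z. cmod z ^ Nb < rr (\<beta> i) z - Y0 i z)" unfolding pos_def by blast
    have "ae (P i (max Na Nb))" using ae_conj[OF ae_r4 ae_conj[OF Na Nb]]
    proof (rule ae_mono)
      fix z assume H: "(0 < cmod z \<and> cmod z \<le> 1/4) \<and> cmod z ^ Na < Y0 i z - rr (\<alpha> i) z \<and> cmod z ^ Nb < rr (\<beta> i) z - Y0 i z"
      have "cmod z ^ max Na Nb \<le> cmod z ^ Na" "cmod z ^ max Na Nb \<le> cmod z ^ Nb"
        using H by (auto intro: rp_mono)
      then show "P i (max Na Nb) z" unfolding P_def using H by linarith
    qed
    then show "\<exists>N. ae (P i N)" by blast
  next
    fix i N M z assume "N \<le> M" "P i N z"
    then show "P i M z" unfolding P_def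
      using power_decreasing[of N M "cmod z"] by auto
  qed simp
  then obtain N1 where N1: "\<And>i. ae (P i N1)" by blast
  define m where "m = N + K + N1 + 3"
  define \<rho> where "\<rho> z = cmod z ^ m" for z
  have b\<rho>: "bnd \<rho>" unfolding \<rho>_def by (rule bnd_rp)
  define \<alpha>' where "\<alpha>' i = ev (\<lambda>z. Y0 i z - \<rho> z)" for i
  define \<beta>' where "\<beta>' i = ev (\<lambda>z. Y0 i z + \<rho> z)" for i
  have bl: "bnd (\<lambda>z. Y0 i z - \<rho> z)" "bnd (\<lambda>z. Y0 i z + \<rho> z)" for i
    by (intro bnd_diff bnd_add bY0 b\<rho>)+
  have part1: "\<alpha>' i \<in> ocarrier RS \<and> \<beta>' i \<in> ocarrier RS \<and> oless RS (\<alpha>' i) (\<beta>' i)" for i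
  proof -
    have "pos (\<lambda>z. 2 * \<rho> z)" unfolding \<rho>_def by (rule pos_cmult[OF _ pos_rp]) simp
    then have "pos (\<lambda>z. (Y0 i z + \<rho> z) - (Y0 i z - \<rho> z))" by simp
    then show ?thesis unfolding \<alpha>'_def \<beta>'_def using ev_in bl rless_ev[OF bl] by blast
  qed
  have part2: "evalS RS e y \<noteq> ozero RS \<and> (\<forall>i. oless RS (\<alpha> i) (y $ i) \<and> oless RS (y $ i) (\<beta> i))"
    if y: "y \<in> ospace RS" and H: "\<forall>i. oless RS (\<alpha>' i) (y $ i) \<and> oless RS (y $ i) (\<beta>' i)" for y
  proof -
    have close: "ae (\<lambda>z. \<bar>rr (y $ i) z - Y0 i z\<bar> < 2 * \<rho> z)" for i
    proof -
      have "pos (\<lambda>z. rr (y $ i) z - rr (\<alpha>' i) z)" using H rless_iff[OF conjunct1[OF part1] ospaceR[OF y]] by blast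
      then have h1: "ae (\<lambda>z. 0 < rr (y $ i) z - rr (\<alpha>' i) z)" by (rule pos_ae)
      have "pos (\<lambda>z. rr (\<beta>' i) z - rr (y $ i) z)" using H rless_iff[OF ospaceR[OF y] conjunct1[OF conjunct2[OF part1]]] by blast
      then have h2: "ae (\<lambda>z. 0 < rr (\<beta>' i) z - rr (y $ i) z)" by (rule pos_ae)
      have h3: "ae (\<lambda>z. \<bar>rr (\<alpha>' i) z - (Y0 i z - \<rho> z)\<bar> \<le> cmod z ^ m)"
        unfolding \<alpha>'_def by (rule negl_ae_le[OF rr_ev[OF bl(1)]])
      have h4: "ae (\<lambda>z. \<bar>rr (\<beta>' i) z - (Y0 i z + \<rho> z)\<bar> \<le> cmod z ^ m)"
        unfolding \<beta>'_def by (rule negl_ae_le[OF rr_ev[OF bl(2)]])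
      show ?thesis using ae_conj[OF ae_conj[OF h1 h2] ae_conj[OF h3 h4]]
        by (rule ae_mono) (auto simp: \<rho>_def)
    qed
    have cl: "ae (\<lambda>z. \<forall>i. \<bar>rr (y $ i) z - Y0 i z\<bar> < 2 * \<rho> z)" by (rule ae_all[OF close])
    have N1': "ae (\<lambda>z. \<forall>i. P i N1 z)" by (rule ae_all[OF N1])
    have ok: "ae (\<lambda>z. (0 < cmod z \<and> cmod z \<le> 1/4) \<and> (\<forall>i. \<bar>rr (y $ i) z - Y0 i z\<bar> < 2 * \<rho> z) \<and> (\<forall>i. P i N1 z))"
      by (rule ae_conj[OF ae_r4 ae_conj[OF cl N1']])
    have A: "oless RS (\<alpha> i) (y $ i) \<and> oless RS (y $ i) (\<beta> i)" for i
    proof -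
      have "ae (\<lambda>z. cmod z ^ Suc N1 < rr (y $ i) z - rr (\<alpha> i) z \<and> cmod z ^ Suc N1 < rr (\<beta> i) z - rr (y $ i) z)"
        using ok
      proof (rule ae_mono)
        fix z assume Hz: "(0 < cmod z \<and> cmod z \<le> 1/4) \<and> (\<forall>i. \<bar>rr (y $ i) z - Y0 i z\<bar> < 2 * \<rho> z) \<and> (\<forall>i. P i N1 z)"
        have f: "cmod z ^ Suc N1 + 2 * cmod z ^ m \<le> cmod z ^ N1"
          using rp_facts[of "cmod z" m N K N1] Hz m_def by auto
        have "\<bar>rr (y $ i) z - Y0 i z\<bar> < 2 * cmod z ^ m" using Hz unfolding \<rho>_def by blast
        moreover have "cmod z ^ N1 < Y0 i z - rr (\<alpha> i) z \<and> cmod z ^ N1 < rr (\<beta> i) z - Y0 i z"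
          using Hz unfolding P_def by auto
        ultimately show "cmod z ^ Suc N1 < rr (y $ i) z - rr (\<alpha> i) z \<and> cmod z ^ Suc N1 < rr (\<beta> i) z - rr (y $ i) z"
          using f by (auto simp: abs_less_iff)
      qed
      then have "pos (\<lambda>z. rr (y $ i) z - rr (\<alpha> i) z)" "pos (\<lambda>z. rr (\<beta> i) z - rr (y $ i) z)"
        unfolding pos_def by (auto dest: ae_mono[where Q="\<lambda>z. cmod z ^ Suc N1 < rr (y $ i) z - rr (\<alpha> i) z"]
          ae_mono[where Q="\<lambda>z. cmod z ^ Suc N1 < rr (\<beta> i) z - rr (y $ i) z"])
      then show ?thesis using rless_iff[OF a ospaceR[OF y]] rless_iff[OF ospaceR[OF y] b] by blast
    qed
    have "ae (\<lambda>z. cmod z ^ Suc N < \<bar>G e y z\<bar>)"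
      using ae_conj[OF ok ae_conj[OF N K]]
    proof (rule ae_mono)
      fix z assume Hz: "((0 < cmod z \<and> cmod z \<le> 1/4) \<and> (\<forall>i. \<bar>rr (y $ i) z - Y0 i z\<bar> < 2 * \<rho> z) \<and> (\<forall>i. P i N1 z))
         \<and> cmod z ^ N < \<bar>G e y0 z\<bar> \<and> \<bar>L z\<bar> \<le> inverse (cmod z ^ K)"
      have f: "2 * cmod z ^ m \<le> 1" "inverse (cmod z ^ K) * (2 * cmod z ^ m) \<le> cmod z ^ Suc N"
        "cmod z ^ Suc N + cmod z ^ Suc N \<le> cmod z ^ N"
        using rp_facts[of "cmod z" m N K N1] Hz m_def by auto
      have Y0M: "\<bar>Y0 i z\<bar> \<le> Mz z - 1" for i
        unfolding Mz_def using member_le_sum[of i UNIV "\<lambda>i. \<bar>Y0 i z\<bar>"] by simp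
      have d: "\<bar>Y0 i z - rr (y $ i) z\<bar> \<le> 2 * \<rho> z" for i using Hz by (simp add: abs_minus_commute less_imp_le)
      have "\<bar>G e y0 z - G e y z\<bar> \<le> L z * (2 * \<rho> z)"
        unfolding G_def L_def Y0_def[symmetric]
      proof (rule reval_lip)
        fix i
        show "\<bar>Y0 i z\<bar> \<le> Mz z" using Y0M[of i] by simp
        show "\<bar>rr (y $ i) z\<bar> \<le> Mz z" using Y0M[of i] d[of i] f(1) unfolding \<rho>_def by linarith
        show "\<bar>Y0 i z - rr (y $ i) z\<bar> \<le> 2 * \<rho> z" by (rule d)
      qed
      also have "\<dots> \<le> inverse (cmod z ^ K) * (2 * \<rho> z)"
        using Hz unfolding \<rho>_def by (intro mult_right_mono) auto
      also have "\<dots> \<le> cmod z ^ Suc N" using f unfolding \<rho>_def by simp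
      finally show "cmod z ^ Suc N < \<bar>G e y z\<bar>" using Hz f(3) by linarith
    qed
    then have "\<not> negl (G e y)" by (rule not_neglI)
    then show ?thesis using evR_zero[OF ce y] A by simp
  qed
  show ?thesis using part1 part2 by blast
qed

end


context UF
begin

lemma cover:
  fixes ps :: "(rfield, 'n::finite) pexp list"
  assumes "\<forall>e\<in>set ps. pcs e \<subseteq> ocarrier RS \<and> \<not> (\<forall>y\<in>ospace RS. evalS RS e y = ozero RS)"
    and "\<forall>i. \<alpha> i \<in> ocarrier RS \<and> \<beta> i \<in> ocarrier RS \<and> oless RS (\<alpha> i) (\<beta> i)"
  shows "\<exists>v\<in>ospace RS. (\<forall>i. oless RS (\<alpha> i) (v $ i) \<and> oless RS (v $ i) (\<beta> i)) \<and>
     (\<forall>e\<in>set ps. evalS RS e v \<noteq> ozero RS)"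
  using assms
proof (induction ps arbitrary: \<alpha> \<beta>)
  case Nil
  define v where "v = (\<chi> i. ev (\<lambda>z. rr (\<alpha> i) z + (1/2) * (rr (\<beta> i) z - rr (\<alpha> i) z)))"
  have "v $ i \<in> ocarrier RS \<and> oless RS (\<alpha> i) (v $ i) \<and> oless RS (v $ i) (\<beta> i)" for i
    unfolding v_def using mid_between[of "\<alpha> i" "\<beta> i" "1/2"] Nil.prems by simp
  then show ?case by (intro bexI[of _ v]) (auto simp: ospace_def)
next
  case (Cons e ps)
  have ce: "pcs e \<subseteq> ocarrier RS" and nz: "\<not> (\<forall>y\<in>ospace RS. evalS RS e y = ozero RS)"
    using Cons.prems by auto
  have "\<not> (\<forall>y\<in>ospace RS. (\<forall>i. oless RS (\<alpha> i) (y $ i) \<and> oless RS (y $ i) (\<beta> i)) \<longrightarrow> evalS RS e y = ozero RS)"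
  proof
    assume Z: "\<forall>y\<in>ospace RS. (\<forall>i. oless RS (\<alpha> i) (y $ i) \<and> oless RS (y $ i) (\<beta> i)) \<longrightarrow> evalS RS e y = ozero RS"
    have "\<forall>y\<in>ospace RS. evalS RS e y = ozero RS"
      using identity[OF ce, of \<alpha> \<beta>] Cons.prems(2) Z by blast
    then show False using nz by blast
  qed
  then obtain y0 where y0: "y0 \<in> ospace RS" "\<forall>i. oless RS (\<alpha> i) (y0 $ i) \<and> oless RS (y0 $ i) (\<beta> i)"
    "evalS RS e y0 \<noteq> ozero RS" by blast
  obtain \<alpha>' \<beta>' where ab': "\<forall>i. \<alpha>' i \<in> ocarrier RS \<and> \<beta>' i \<in> ocarrier RS \<and> oless RS (\<alpha>' i) (\<beta>' i)"
    and sub: "\<forall>y\<in>ospace RS. (\<forall>i. oless RS (\<alpha>' i) (y $ i) \<and> oless RS (y $ i) (\<beta>' i)) \<longrightarrow>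
        evalS RS e y \<noteq> ozero RS \<and> (\<forall>i. oless RS (\<alpha> i) (y $ i) \<and> oless RS (y $ i) (\<beta> i))"
    using cont[OF ce y0(1) y0(3), of \<alpha> \<beta>] Cons.prems(2) y0(2) by blast
  obtain v where v: "v \<in> ospace RS" "\<forall>i. oless RS (\<alpha>' i) (v $ i) \<and> oless RS (v $ i) (\<beta>' i)"
    "\<forall>e\<in>set ps. evalS RS e v \<noteq> ozero RS"
    using Cons.IH[of \<alpha>' \<beta>'] Cons.prems(1) ab' by auto
  show ?case using v sub by (intro bexI[of _ v]) auto
qed

lemma rrep_props: "x \<in> ocarrier RS \<Longrightarrow> rrep x \<in> Ar U \<and> rcls U (rrep x) = x"
proof -
  assume "x \<in> ocarrier RS"
  then obtain a where a: "a \<in> Ar U" "x = req U `` {a}" unfolding rcar quotient_def by blast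
  then have "a \<in> x" using equiv_class_self[OF equiv_req a(1)] by simp
  then have "rrep x \<in> x" unfolding rrep_def by (rule someI[where P="\<lambda>g. g \<in> x"])
  then have "(a, rrep x) \<in> req U" using a by simp
  then have r: "rrep x \<in> Ar U" by (simp add: req_iff)
  have eq: "x = req U `` {rrep x}"
    using a equiv_class_eq[OF equiv_req \<open>(a, rrep x) \<in> req U\<close>] by simp
  then show ?thesis using r unfolding rcls_def by simp
qed

lemma Ar_car: "Ar U \<subseteq> ocarrier HS"
  unfolding Ar_def hcar by auto

definition le0 :: "(hstar, 'n::finite) pexp \<Rightarrow> (hstar ^ 'n) set" where
  "le0 Q = ospace HS - {x \<in> ospace HS. oless HS (ozero HS) (evalS HS Q x)}"

definition FH :: "(hstar, 'n::finite) pexp \<Rightarrow> hstar ^ 'n \<Rightarrow> complex \<Rightarrow> real" where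
  "FH Q x z = reval (cmap (\<lambda>c. hrep c z) Q) (\<lambda>i. hrep (x $ i) z)"

lemma ospaceH: "x \<in> ospace HS \<Longrightarrow> x $ i \<in> UNIV // ueq U"
  unfolding ospace_def hcar by simp

lemma le0_semialg: "pcs Q \<subseteq> ocarrier HS \<Longrightarrow> le0 Q \<in> semialg HS"
  unfolding le0_def by (intro semialg.scompl semialg.sbasic evalS_polyfun)

lemma le0_mem: "pcs Q \<subseteq> ocarrier HS \<Longrightarrow> x \<in> ospace HS \<Longrightarrow> x \<in> le0 Q \<longleftrightarrow> \<not> ae (\<lambda>z. 0 < FH Q x z)"
  unfolding le0_def FH_def using evalS_HS[of Q x] hless_hcls by (simp add: h_ops)

lemma le0_sub: "le0 Q \<subseteq> ospace HS"
  unfolding le0_def by auto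

lemma hless_ospace: "x \<in> ospace HS \<Longrightarrow> oless HS (hcls U f) (x $ i) \<longleftrightarrow> ae (\<lambda>z. f z < hrep (x $ i) z)"
  using hless_hcls[of f "hrep (x $ i)"] hcls_hrep[OF ospaceH] by metis

lemma hless_ospace2: "x \<in> ospace HS \<Longrightarrow> oless HS (x $ i) (hcls U f) \<longleftrightarrow> ae (\<lambda>z. hrep (x $ i) z < f z)"
  using hless_hcls[of "hrep (x $ i)" f] hcls_hrep[OF ospaceH] by metis

lemma le0_closed:
  fixes Q :: "(hstar, 'n::finite) pexp"
  assumes cQ: "pcs Q \<subseteq> ocarrier HS"
  shows "oclosed HS (le0 Q)"
  unfolding oclosed_def
proof (intro conjI ballI)
  show "le0 Q \<subseteq> ospace HS" by (rule le0_sub)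
  fix x assume x: "x \<in> ospace HS - le0 Q"
  then have xs: "x \<in> ospace HS" and Fx: "ae (\<lambda>z. 0 < FH Q x z)" using le0_mem[OF cQ] by auto
  define X where "X i z = hrep (x $ i) z" for i z
  define Mz where "Mz z = (\<Sum>i\<in>UNIV. \<bar>X i z\<bar>) + 1" for z
  define L where "L z = lb (cmap (\<lambda>c. hrep c z) Q) (Mz z)" for z
  define \<delta> where "\<delta> z = min (1/2) (FH Q x z / (L z + 1))" for z
  have M0: "0 \<le> Mz z" for z unfolding Mz_def by (simp add: sum_nonneg)
  have L0: "0 \<le> L z" for z unfolding L_def by (rule lb_nonneg[OF M0])
  define a where "a = (\<chi> i. hcls U (\<lambda>z. X i z - \<delta> z))"
  define b where "b = (\<chi> i. hcls U (\<lambda>z. X i z + \<delta> z))"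
  have ab: "a \<in> ospace HS" "b \<in> ospace HS" unfolding a_def b_def ospace_def hcar by (auto simp: hcls_in)
  have dpos: "ae (\<lambda>z. 0 < \<delta> z)" using Fx
  proof (rule ae_mono)
    fix z assume "0 < FH Q x z"
    moreover have "0 < L z + 1" using L0[of z] by simp
    ultimately show "0 < \<delta> z" unfolding \<delta>_def by simp
  qed
  have ax: "oless HS (a $ i) (x $ i) \<and> oless HS (x $ i) (b $ i)" for i
    unfolding a_def b_def using hless_ospace[OF xs] hless_ospace2[OF xs] dpos
    by (auto simp: X_def elim: ae_mono)
  have disj: "\<not> (\<forall>i. oless HS (a $ i) (y $ i) \<and> oless HS (y $ i) (b $ i))" if y: "y \<in> le0 Q" for y
  proof
    assume H: "\<forall>i. oless HS (a $ i) (y $ i) \<and> oless HS (y $ i) (b $ i)"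
    have ys: "y \<in> ospace HS" using y le0_sub by blast
    have "ae (\<lambda>z. \<bar>hrep (y $ i) z - X i z\<bar> < \<delta> z)" for i
    proof -
      have "ae (\<lambda>z. X i z - \<delta> z < hrep (y $ i) z)" "ae (\<lambda>z. hrep (y $ i) z < X i z + \<delta> z)"
        using H hless_ospace[OF ys] hless_ospace2[OF ys] unfolding a_def b_def by auto
      from ae_conj[OF this] show ?thesis by (rule ae_mono) auto
    qed
    then have cl: "ae (\<lambda>z. \<forall>i. \<bar>hrep (y $ i) z - X i z\<bar> < \<delta> z)" by (rule ae_all)
    have "ae (\<lambda>z. 0 < FH Q y z)" using ae_conj[OF cl Fx]
    proof (rule ae_mono)
      fix z assume Hz: "(\<forall>i. \<bar>hrep (y $ i) z - X i z\<bar> < \<delta> z) \<and> 0 < FH Q x z"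
      have d1: "\<delta> z \<le> 1/2" unfolding \<delta>_def by (rule min.cobounded1)
      have XM: "\<bar>X i z\<bar> \<le> Mz z - 1" for i
        unfolding Mz_def using member_le_sum[of i UNIV "\<lambda>i. \<bar>X i z\<bar>"] by simp
      have "\<bar>FH Q x z - FH Q y z\<bar> \<le> L z * \<delta> z"
        unfolding FH_def L_def X_def[symmetric]
      proof (rule reval_lip)
        fix i
        show "\<bar>X i z\<bar> \<le> Mz z" using XM[of i] by simp
        have "\<bar>hrep (y $ i) z - X i z\<bar> < \<delta> z" using Hz by blast
        then show "\<bar>hrep (y $ i) z\<bar> \<le> Mz z" using XM[of i] d1 by linarith
        show "\<bar>X i z - hrep (y $ i) z\<bar> \<le> \<delta> z" using Hz by (simp add: abs_minus_commute less_imp_le)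
      qed
      also have "\<dots> \<le> L z * (FH Q x z / (L z + 1))" unfolding \<delta>_def using L0[of z]
        by (intro mult_left_mono) auto
      also have "\<dots> < FH Q x z" using L0[of z] Hz by (simp add: field_simps)
      finally show "0 < FH Q y z" by linarith
    qed
    then show False using y le0_mem[OF cQ ys] by simp
  qed
  show "\<exists>a b. a \<in> ospace HS \<and> b \<in> ospace HS \<and> (\<forall>i. oless HS (a $ i) (x $ i) \<and> oless HS (x $ i) (b $ i)) \<and>
        (\<forall>y\<in>le0 Q. \<not> (\<forall>i. oless HS (a $ i) (y $ i) \<and> oless HS (y $ i) (b $ i)))"
    using ab ax disj by blast
qed

end


lemma oclosed_Int: "oclosed S A \<Longrightarrow> oclosed S B \<Longrightarrow> oclosed S (A \<inter> B)"
  unfolding oclosed_def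
proof (intro conjI ballI)
  assume A: "A \<subseteq> ospace S \<and> (\<forall>x\<in>ospace S - A. \<exists>a b. a \<in> ospace S \<and> b \<in> ospace S \<and>
      (\<forall>i. oless S (a $ i) (x $ i) \<and> oless S (x $ i) (b $ i)) \<and>
      (\<forall>y\<in>A. \<not> (\<forall>i. oless S (a $ i) (y $ i) \<and> oless S (y $ i) (b $ i))))"
    and B: "B \<subseteq> ospace S \<and> (\<forall>x\<in>ospace S - B. \<exists>a b. a \<in> ospace S \<and> b \<in> ospace S \<and>
      (\<forall>i. oless S (a $ i) (x $ i) \<and> oless S (x $ i) (b $ i)) \<and>
      (\<forall>y\<in>B. \<not> (\<forall>i. oless S (a $ i) (y $ i) \<and> oless S (y $ i) (b $ i))))"
  show "A \<inter> B \<subseteq> ospace S" using A by auto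
  fix x assume x: "x \<in> ospace S - A \<inter> B"
  then have "x \<in> ospace S - A \<or> x \<in> ospace S - B" by auto
  then show "\<exists>a b. a \<in> ospace S \<and> b \<in> ospace S \<and>
      (\<forall>i. oless S (a $ i) (x $ i) \<and> oless S (x $ i) (b $ i)) \<and>
      (\<forall>y\<in>A \<inter> B. \<not> (\<forall>i. oless S (a $ i) (y $ i) \<and> oless S (y $ i) (b $ i)))"
  proof
    assume "x \<in> ospace S - A"
    then obtain a b where "a \<in> ospace S \<and> b \<in> ospace S \<and>
      (\<forall>i. oless S (a $ i) (x $ i) \<and> oless S (x $ i) (b $ i)) \<and>
      (\<forall>y\<in>A. \<not> (\<forall>i. oless S (a $ i) (y $ i) \<and> oless S (y $ i) (b $ i)))" using A by blast
    then show ?thesis by blast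
  next
    assume "x \<in> ospace S - B"
    then obtain a b where "a \<in> ospace S \<and> b \<in> ospace S \<and>
      (\<forall>i. oless S (a $ i) (x $ i) \<and> oless S (x $ i) (b $ i)) \<and>
      (\<forall>y\<in>B. \<not> (\<forall>i. oless S (a $ i) (y $ i) \<and> oless S (y $ i) (b $ i)))" using B by blast
    then show ?thesis by blast
  qed
qed

lemma semialg_Un: "A \<in> semialg S \<Longrightarrow> B \<in> semialg S \<Longrightarrow> A \<subseteq> ospace S \<Longrightarrow> B \<subseteq> ospace S \<Longrightarrow>
  A \<union> B \<in> semialg S"
proof -
  assume "A \<in> semialg S" "B \<in> semialg S" "A \<subseteq> ospace S" "B \<subseteq> ospace S"
  then have "ospace S - ((ospace S - A) \<inter> (ospace S - B)) \<in> semialg S"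
    by (intro semialg.scompl semialg.sinter)
  moreover have "ospace S - ((ospace S - A) \<inter> (ospace S - B)) = A \<union> B"
    using \<open>A \<subseteq> ospace S\<close> \<open>B \<subseteq> ospace S\<close> by auto
  ultimately show ?thesis by simp
qed

lemma pcs_cmap: "pcs (cmap g e) = g ` pcs e"
  by (induction e) auto

lemma cmap_cmap: "cmap f (cmap g e) = cmap (f \<circ> g) e"
  by (induction e) auto

context UF
begin

lemma ae_conj_iff: "ae (\<lambda>z. P z \<and> Q z) \<longleftrightarrow> ae P \<and> ae Q"
proof
  assume h: "ae (\<lambda>z. P z \<and> Q z)"
  show "ae P \<and> ae Q" using ae_mono[OF h, of P] ae_mono[OF h, of Q] by blast
qed (use ae_conj in blast)

lemma oclosed_Un:
  fixes A B :: "(hstar ^ 'n::finite) set"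
  assumes A: "oclosed HS A" and B: "oclosed HS B"
  shows "oclosed HS (A \<union> B)"
  unfolding oclosed_def
proof (intro conjI ballI)
  show "A \<union> B \<subseteq> ospace HS" using A B unfolding oclosed_def by auto
  fix x assume x: "x \<in> ospace HS - (A \<union> B)"
  obtain a b where ab: "a \<in> ospace HS" "b \<in> ospace HS" "\<forall>i. oless HS (a $ i) (x $ i) \<and> oless HS (x $ i) (b $ i)"
    "\<forall>y\<in>A. \<not> (\<forall>i. oless HS (a $ i) (y $ i) \<and> oless HS (y $ i) (b $ i))"
    using A x unfolding oclosed_def by blast
  obtain a' b' where ab': "a' \<in> ospace HS" "b' \<in> ospace HS" "\<forall>i. oless HS (a' $ i) (x $ i) \<and> oless HS (x $ i) (b' $ i)"
    "\<forall>y\<in>B. \<not> (\<forall>i. oless HS (a' $ i) (y $ i) \<and> oless HS (y $ i) (b' $ i))"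
    using B x unfolding oclosed_def by blast
  define a2 where "a2 = (\<chi> i. hcls U (\<lambda>z. max (hrep (a $ i) z) (hrep (a' $ i) z)))"
  define b2 where "b2 = (\<chi> i. hcls U (\<lambda>z. min (hrep (b $ i) z) (hrep (b' $ i) z)))"
  have in2: "a2 \<in> ospace HS" "b2 \<in> ospace HS" unfolding a2_def b2_def ospace_def hcar by (auto simp: hcls_in)
  have key: "(\<forall>i. oless HS (a2 $ i) (y $ i) \<and> oless HS (y $ i) (b2 $ i)) \<longleftrightarrow>
     (\<forall>i. oless HS (a $ i) (y $ i) \<and> oless HS (y $ i) (b $ i)) \<and> (\<forall>i. oless HS (a' $ i) (y $ i) \<and> oless HS (y $ i) (b' $ i))"
    if y: "y \<in> ospace HS" for y
  proof -
    have "oless HS (a2 $ i) (y $ i) \<longleftrightarrow> oless HS (a $ i) (y $ i) \<and> oless HS (a' $ i) (y $ i)" for i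
    proof -
      have "oless HS (a2 $ i) (y $ i) \<longleftrightarrow> ae (\<lambda>z. max (hrep (a $ i) z) (hrep (a' $ i) z) < hrep (y $ i) z)"
        unfolding a2_def using hless_ospace[OF y] by simp
      also have "\<dots> \<longleftrightarrow> ae (\<lambda>z. hrep (a $ i) z < hrep (y $ i) z) \<and> ae (\<lambda>z. hrep (a' $ i) z < hrep (y $ i) z)"
        by (simp add: ae_conj_iff)
      finally show ?thesis by (simp add: h_ops)
    qed
    moreover have "oless HS (y $ i) (b2 $ i) \<longleftrightarrow> oless HS (y $ i) (b $ i) \<and> oless HS (y $ i) (b' $ i)" for i
    proof -
      have "oless HS (y $ i) (b2 $ i) \<longleftrightarrow> ae (\<lambda>z. hrep (y $ i) z < min (hrep (b $ i) z) (hrep (b' $ i) z))"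
        unfolding b2_def using hless_ospace2[OF y] by simp
      also have "\<dots> \<longleftrightarrow> ae (\<lambda>z. hrep (y $ i) z < hrep (b $ i) z) \<and> ae (\<lambda>z. hrep (y $ i) z < hrep (b' $ i) z)"
        by (simp add: ae_conj_iff)
      finally show ?thesis by (simp add: h_ops)
    qed
    ultimately show ?thesis by blast
  qed
  have xs: "x \<in> ospace HS" using x by blast
  show "\<exists>a b. a \<in> ospace HS \<and> b \<in> ospace HS \<and> (\<forall>i. oless HS (a $ i) (x $ i) \<and> oless HS (x $ i) (b $ i)) \<and>
        (\<forall>y\<in>A \<union> B. \<not> (\<forall>i. oless HS (a $ i) (y $ i) \<and> oless HS (y $ i) (b $ i)))"
  proof (intro exI conjI ballI)
    show "a2 \<in> ospace HS" "b2 \<in> ospace HS" by (rule in2)+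
    show "\<forall>i. oless HS (a2 $ i) (x $ i) \<and> oless HS (x $ i) (b2 $ i)" using key[OF xs] ab(3) ab'(3) by blast
    fix y assume y: "y \<in> A \<union> B"
    then have ys: "y \<in> ospace HS" using A B unfolding oclosed_def by auto
    show "\<not> (\<forall>i. oless HS (a2 $ i) (y $ i) \<and> oless HS (y $ i) (b2 $ i))"
      using key[OF ys] ab(4) ab'(4) y by blast
  qed
qed

definition m1 :: hstar where "m1 = hcls U (\<lambda>z. - 1)"

definition liftH :: "(rfield, 'n) pexp \<Rightarrow> (hstar, 'n) pexp" where
  "liftH e = cmap rrep e"

definition iszero :: "(rfield, 'n::finite) pexp \<Rightarrow> bool" where
  "iszero e \<longleftrightarrow> (\<forall>y\<in>ospace RS. evalS RS e y = ozero RS)"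

primrec cl :: "(rfield, 'n::finite) fm \<Rightarrow> bool \<Rightarrow> (hstar ^ 'n) set" where
  "cl (FB e) b = (if iszero e then le0 (PC (if b then oone HS else ozero HS))
      else if b then le0 (PM (PC m1) (liftH e)) else le0 (liftH e))"
| "cl (FC f) b = cl f (\<not> b)"
| "cl (FI f g) b = (if b then cl f True \<inter> cl g True else cl f False \<union> cl g False)"

lemma pcs_liftH: "pcs e \<subseteq> ocarrier RS \<Longrightarrow> pcs (liftH e) \<subseteq> ocarrier HS"
  unfolding liftH_def pcs_cmap using rrep_props Ar_car by blast

lemma m1_in: "m1 \<in> ocarrier HS" unfolding m1_def hcar by (rule hcls_in)

lemma hone_in: "oone HS \<in> ocarrier HS" and hzero_in: "ozero HS \<in> ocarrier HS"
  unfolding h_ops hcar by (rule hcls_in)+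

lemma le0_props: "pcs Q \<subseteq> ocarrier HS \<Longrightarrow> le0 Q \<in> semialg HS \<and> oclosed HS (le0 Q) \<and> le0 Q \<subseteq> ospace HS"
  using le0_semialg le0_closed le0_sub by blast

lemma cl_props: "fok RS f \<Longrightarrow> cl f b \<in> semialg HS \<and> oclosed HS (cl f b) \<and> cl f b \<subseteq> ospace HS"
proof (induction f arbitrary: b)
  case (FB e)
  then have ce: "pcs e \<subseteq> ocarrier RS" by (simp add: fok_def)
  have "pcs (PC (if b then oone HS else ozero HS)) \<subseteq> ocarrier HS" using hone_in hzero_in by auto
  moreover have "pcs (PM (PC m1) (liftH e)) \<subseteq> ocarrier HS" using pcs_liftH[OF ce] m1_in by auto
  ultimately show ?case using le0_props[of "PC (if b then oone HS else ozero HS)"]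
    le0_props[of "PM (PC m1) (liftH e)"] le0_props[OF pcs_liftH[OF ce]] by (cases b) auto
next
  case (FC f) then show ?case by (simp add: fok_def)
next
  case (FI f g)
  then have "fok RS f" "fok RS g" by (auto simp: fok_def)
  with FI.IH show ?case
    by (auto intro!: semialg.sinter semialg_Un oclosed_Int oclosed_Un)
qed

lemma FH_liftH: "FH (liftH e) x z = reval (cmap (\<lambda>c. rr c z) e) (\<lambda>i. hrep (x $ i) z)"
  unfolding FH_def liftH_def cmap_cmap by (simp add: o_def rr_def)

lemma ae_m1: "ae (\<lambda>z. hrep m1 z = -1)"
  unfolding m1_def by (rule hrep_hcls)

lemma corr:
  fixes f :: "(rfield, 'n::finite) fm"
  assumes fk: "fok RS f" and x: "x \<in> ospace HS" and xA: "\<And>i. x $ i \<in> Ar U"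
    and good: "\<And>e. e \<in> set (fpolys f) \<Longrightarrow> \<not> iszero e \<Longrightarrow> evalS RS e (red x) \<noteq> ozero RS"
  shows "x \<in> cl f b \<longleftrightarrow> ((red x \<in> sem RS f) = b)"
  using fk good
proof (induction f arbitrary: b)
  have bX: "bnd (hrep (x $ i))" for i using Ar_cases[OF xA] by blast
  have rx: "red x $ i = ev (hrep (x $ i))" for i unfolding red_def using rcls_Ar[OF xA] by simp
  have rxs: "red x \<in> ospace RS" unfolding ospace_def using rx ev_in bX by simp
  {
    case (FB e)
    have ce: "pcs e \<subseteq> ocarrier RS" using FB by (simp add: fok_def)
    define W where "W z = reval (cmap (\<lambda>c. rr c z) e) (\<lambda>i. hrep (x $ i) z)" for z
    have ev: "evalS RS e (red x) = ev W" and bW: "bnd W"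
      using evalS_RS[OF ce rx bX] unfolding W_def by auto
    have semiff: "red x \<in> sem RS (FB e) \<longleftrightarrow> pos W"
      using rxs rless_ev[OF bnd_const bW] by (simp add: ev r_ops)
    show ?case
    proof (cases "iszero e")
      case True
      then have "evalS RS e (red x) = ozero RS" using rxs iszero_def by blast
      then have ns: "red x \<notin> sem RS (FB e)" by (simp add: r_ops)
      have "ae (\<lambda>z. hrep (oone HS) z = 1)" "ae (\<lambda>z. hrep (ozero HS) z = 0)"
        unfolding h_ops by (rule hrep_hcls)+
      then have "ae (\<lambda>z. 0 < hrep (oone HS) z)" "\<not> ae (\<lambda>z. 0 < hrep (ozero HS) z)"
      proof -
        show "ae (\<lambda>z. 0 < hrep (oone HS) z)" using \<open>ae (\<lambda>z. hrep (oone HS) z = 1)\<close> by (rule ae_mono) simp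
        show "\<not> ae (\<lambda>z. 0 < hrep (ozero HS) z)"
        proof
          assume "ae (\<lambda>z. 0 < hrep (ozero HS) z)"
          from ae_conj[OF this \<open>ae (\<lambda>z. hrep (ozero HS) z = 0)\<close>] have "ae (\<lambda>z. False)" by (rule ae_mono) auto
          then show False using ae_False by simp
        qed
      qed
      then show ?thesis using True ns le0_mem[OF _ x] hone_in hzero_in by (cases b) (auto simp: FH_def)
    next
      case False
      then have "ev W \<noteq> ev (\<lambda>z. 0)" using FB.prems(2) ev by (simp add: r_ops)
      then have nn: "\<not> negl W" using ev_eq[OF bW bnd_const] by simp
      then obtain N where "ae (\<lambda>z. cmod z ^ N < \<bar>W z\<bar>)" using not_negl by blast
      then have nz: "ae (\<lambda>z. W z \<noteq> 0)" by (rule ae_mono) auto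
      have p: "pos W \<longleftrightarrow> ae (\<lambda>z. 0 < W z)" using pos_iff[OF nn] .
      have neg: "ae (\<lambda>z. 0 < hrep m1 z * W z) \<longleftrightarrow> ae (\<lambda>z. W z < 0)"
        by (rule ae_iff_cong, rule ae_mono[OF ae_m1]) (simp add: zero_less_mult_iff)
      have opp: "ae (\<lambda>z. W z < 0) \<longleftrightarrow> \<not> ae (\<lambda>z. 0 < W z)"
      proof -
        have "ae (\<lambda>z. W z < 0 \<longleftrightarrow> \<not> 0 < W z)" using nz by (rule ae_mono) auto
        then have "ae (\<lambda>z. W z < 0) \<longleftrightarrow> ae (\<lambda>z. \<not> 0 < W z)" by (rule ae_iff_cong)
        then show ?thesis using ae_not_iff by simp
      qed
      have l1: "x \<in> le0 (liftH e) \<longleftrightarrow> \<not> ae (\<lambda>z. 0 < W z)"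
        using le0_mem[OF pcs_liftH[OF ce] x] unfolding FH_liftH W_def by simp
      have l2: "x \<in> le0 (PM (PC m1) (liftH e)) \<longleftrightarrow> \<not> ae (\<lambda>z. 0 < hrep m1 z * W z)"
        using le0_mem[OF _ x, of "PM (PC m1) (liftH e)"] pcs_liftH[OF ce] m1_in
        unfolding W_def by (simp add: FH_def[of "PM _ _"] FH_liftH[unfolded FH_def])
      show ?thesis using False l1 l2 neg opp p semiff by (cases b) auto
    qed
  next
    case (FC f)
    then show ?case using rxs by (auto simp: fok_def)
  next
    case (FI f g)
    then show ?case by (cases b) (auto simp: fok_def)
  }
qed

end


context UF
begin

definition bx1 :: "rfield \<Rightarrow> 'n::finite \<Rightarrow> (hstar, 'n) pexp" where
  "bx1 lo i = PA (PC (rrep lo)) (PM (PC m1) (PV i))"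

definition bx2 :: "rfield \<Rightarrow> 'n::finite \<Rightarrow> (hstar, 'n) pexp" where
  "bx2 hi i = PA (PV i) (PM (PC m1) (PC (rrep hi)))"

definition boxI :: "rfield \<Rightarrow> rfield \<Rightarrow> 'n::finite set \<Rightarrow> (hstar ^ 'n) set" where
  "boxI lo hi I = {x \<in> ospace HS. \<forall>i\<in>I. x \<in> le0 (bx1 lo i) \<and> x \<in> le0 (bx2 hi i)}"

lemma le0_zero: "le0 (PC (ozero HS)) = ospace HS"
proof -
  have h: "ae (\<lambda>z. hrep (ozero HS) z = 0)" unfolding h_ops by (rule hrep_hcls)
  have "\<not> ae (\<lambda>z. 0 < hrep (ozero HS) z)"
  proof
    assume "ae (\<lambda>z. 0 < hrep (ozero HS) z)"
    from ae_conj[OF this h] have "ae (\<lambda>z. False)" by (rule ae_mono) auto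
    then show False using ae_False by simp
  qed
  then show ?thesis using le0_mem[of "PC (ozero HS)"] hzero_in le0_sub by (auto simp: FH_def)
qed

lemma pcs_bx: "lo \<in> ocarrier RS \<Longrightarrow> pcs (bx1 lo i) \<subseteq> ocarrier HS"
  "hi \<in> ocarrier RS \<Longrightarrow> pcs (bx2 hi i) \<subseteq> ocarrier HS"
  unfolding bx1_def bx2_def using rrep_props Ar_car m1_in by auto

lemma boxI_props:
  assumes lo: "lo \<in> ocarrier RS" and hi: "hi \<in> ocarrier RS" and I: "finite I"
  shows "boxI lo hi I \<in> semialg HS \<and> oclosed HS (boxI lo hi I)"
  using I
proof (induction I rule: finite_induct)
  case empty
  have eq: "boxI lo hi {} = le0 (PC (ozero HS))" unfolding boxI_def le0_zero by simp
  have "pcs (PC (ozero HS) :: (hstar, 'n) pexp) \<subseteq> ocarrier HS" using hzero_in by simp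
  then show ?case unfolding eq using le0_props by blast
next
  case (insert i I)
  have "boxI lo hi (insert i I) = le0 (bx1 lo i) \<inter> le0 (bx2 hi i) \<inter> boxI lo hi I"
    unfolding boxI_def using le0_sub by auto
  then show ?case using insert.IH le0_props[OF pcs_bx(1)[OF lo]] le0_props[OF pcs_bx(2)[OF hi]]
    by (auto intro!: semialg.sinter oclosed_Int)
qed

lemma box_mem:
  assumes lo: "lo \<in> ocarrier RS" and hi: "hi \<in> ocarrier RS" and x: "x \<in> ospace HS"
  shows "x \<in> boxI lo hi UNIV \<longleftrightarrow>
    (\<forall>i. ae (\<lambda>z. rr lo z \<le> hrep (x $ i) z) \<and> ae (\<lambda>z. hrep (x $ i) z \<le> rr hi z))"
proof -
  have "x \<in> le0 (bx1 lo i) \<longleftrightarrow> ae (\<lambda>z. rr lo z \<le> hrep (x $ i) z)" for i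
  proof -
    have "ae (\<lambda>z. 0 < FH (bx1 lo i) x z) \<longleftrightarrow> ae (\<lambda>z. \<not> rr lo z \<le> hrep (x $ i) z)"
      by (rule ae_iff_cong, rule ae_mono[OF ae_m1]) (auto simp: FH_def bx1_def rr_def)
    then show ?thesis using le0_mem[OF pcs_bx(1)[OF lo] x] ae_not_iff by simp
  qed
  moreover have "x \<in> le0 (bx2 hi i) \<longleftrightarrow> ae (\<lambda>z. hrep (x $ i) z \<le> rr hi z)" for i
  proof -
    have "ae (\<lambda>z. 0 < FH (bx2 hi i) x z) \<longleftrightarrow> ae (\<lambda>z. \<not> hrep (x $ i) z \<le> rr hi z)"
      by (rule ae_iff_cong, rule ae_mono[OF ae_m1]) (auto simp: FH_def bx2_def rr_def)
    then show ?thesis using le0_mem[OF pcs_bx(2)[OF hi] x] ae_not_iff by simp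
  qed
  ultimately show ?thesis unfolding boxI_def using x by auto
qed

lemma main:
  fixes K :: "(rfield ^ 'n::finite) set"
  assumes K: "def_compact RS K"
  shows "\<exists>E :: (hstar ^ 'n) set. def_compact HS E \<and>
           E \<subseteq> {x. \<forall>i. x $ i \<in> Ar U} \<and>
           dim_le RS ((reduce_set U E - K) \<union> (K - reduce_set U E)) (CARD('n) - 1)"
proof -
  have Ks: "K \<in> semialg RS" and Kb: "obounded RS K" using K unfolding def_compact_def by auto
  obtain lo hi where lo: "lo \<in> ocarrier RS" and hi: "hi \<in> ocarrier RS"
    and lohi: "\<forall>y\<in>K. \<forall>i. oless RS lo (y $ i) \<and> oless RS (y $ i) hi"
    using Kb unfolding obounded_def by blast
  obtain f where fk: "fok RS f" and Kf: "K = sem RS f" using semialg_rep[OF Ks] by blast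
  define E where "E = cl f True \<inter> boxI lo hi UNIV"
  have clp: "cl f True \<in> semialg HS" "oclosed HS (cl f True)" "cl f True \<subseteq> ospace HS"
    using cl_props[OF fk] by auto
  have bp: "boxI lo hi UNIV \<in> semialg HS" "oclosed HS (boxI lo hi UNIV)"
    using boxI_props[OF lo hi] by auto
  have Esub: "E \<subseteq> ospace HS" unfolding E_def using clp by auto
  have Ebox: "ae (\<lambda>z. rr lo z \<le> hrep (x $ i) z) \<and> ae (\<lambda>z. hrep (x $ i) z \<le> rr hi z)" if "x \<in> E" for x i
    using box_mem[OF lo hi] that Esub unfolding E_def by blast
  have EA: "E \<subseteq> {x. \<forall>i. x $ i \<in> Ar U}"
  proof (clarify)
    fix x i assume x: "x \<in> E"
    have "ae (\<lambda>z. rr lo z \<le> hrep (x $ i) z \<and> hrep (x $ i) z \<le> rr hi z)"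
      using Ebox[OF x, of i] by (intro ae_conj) auto
    then have "ae (\<lambda>z. \<bar>hrep (x $ i) z\<bar> \<le> \<bar>\<bar>rr lo z\<bar> + \<bar>rr hi z\<bar>\<bar>)" by (rule ae_mono) auto
    then have bb: "bnd (hrep (x $ i))" by (rule bnd_le[rotated]) (intro bnd_add bnd_abs rr_bnd lo hi)
    have "hcls U (hrep (x $ i)) \<in> Ar U" using bb hcls_Ar by blast
    moreover have eq: "hcls U (hrep (x $ i)) = x $ i" using hcls_hrep[OF ospaceH] x Esub by auto
    ultimately show "x $ i \<in> Ar U" by simp
  qed
  have Ecomp: "def_compact HS E"
    unfolding def_compact_def
  proof (intro conjI)
    show "E \<in> semialg HS" unfolding E_def using clp bp by (intro semialg.sinter)
    show "oclosed HS E" unfolding E_def using clp bp by (intro oclosed_Int)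
    show "obounded HS E" unfolding obounded_def
    proof (intro conjI)
      show "E \<subseteq> ospace HS" by (rule Esub)
      have "\<forall>y\<in>E. \<forall>i. oless HS (hcls U (\<lambda>z. rr lo z - 1)) (y $ i) \<and> oless HS (y $ i) (hcls U (\<lambda>z. rr hi z + 1))"
      proof (intro ballI allI)
        fix y i assume y: "y \<in> E"
        have ys: "y \<in> ospace HS" using y Esub by blast
        have "ae (\<lambda>z. rr lo z - 1 < hrep (y $ i) z)" using conjunct1[OF Ebox[OF y, of i]] by (rule ae_mono) simp
        moreover have "ae (\<lambda>z. hrep (y $ i) z < rr hi z + 1)" using conjunct2[OF Ebox[OF y, of i]] by (rule ae_mono) simp
        ultimately show "oless HS (hcls U (\<lambda>z. rr lo z - 1)) (y $ i) \<and> oless HS (y $ i) (hcls U (\<lambda>z. rr hi z + 1))"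
          using hless_ospace[OF ys] hless_ospace2[OF ys] by simp
      qed
      moreover have "hcls U (\<lambda>z. rr lo z - 1) \<in> ocarrier HS" "hcls U (\<lambda>z. rr hi z + 1) \<in> ocarrier HS"
        by (simp_all add: hcar hcls_in)
      ultimately show "\<exists>a\<in>ocarrier HS. \<exists>b\<in>ocarrier HS. \<forall>y\<in>E. \<forall>i. oless HS a (y $ i) \<and> oless HS (y $ i) b"
        by blast
    qed
  qed
  define good where "good y \<longleftrightarrow> (\<forall>e\<in>set (fpolys f). \<not> iszero e \<longrightarrow> evalS RS e y \<noteq> ozero RS)" for y
  have sd: "y \<in> K \<longleftrightarrow> y \<in> red ` E" if y: "y \<in> ospace RS" and gy: "good y" for y
  proof
    assume yK: "y \<in> K"
    define x where "x = (\<chi> i. rrep (y $ i))"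
    have xA: "x $ i \<in> Ar U" for i unfolding x_def using rrep_props ospaceR[OF y] by simp
    have xs: "x \<in> ospace HS" unfolding ospace_def using xA Ar_car by blast
    have rx: "red x = y" unfolding red_def x_def using rrep_props ospaceR[OF y] by (simp add: vec_eq_iff)
    have "x \<in> cl f True" using corr[OF fk xs xA, of True] gy yK Kf rx unfolding good_def by simp
    moreover have "x \<in> boxI lo hi UNIV"
    proof -
      have "ae (\<lambda>z. rr lo z \<le> hrep (x $ i) z) \<and> ae (\<lambda>z. hrep (x $ i) z \<le> rr hi z)" for i
      proof -
        have "hrep (x $ i) = rr (y $ i)" unfolding x_def rr_def by simp
        moreover have h1: "ae (\<lambda>z. rr lo z < rr (y $ i) z)" and h2: "ae (\<lambda>z. rr (y $ i) z < rr hi z)"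
          using lohi yK unfolding r_ops by auto
        have "ae (\<lambda>z. rr lo z \<le> rr (y $ i) z)" using h1 by (rule ae_mono) simp
        moreover have "ae (\<lambda>z. rr (y $ i) z \<le> rr hi z)" using h2 by (rule ae_mono) simp
        ultimately show ?thesis by simp
      qed
      then show ?thesis using box_mem[OF lo hi xs] by blast
    qed
    ultimately show "y \<in> red ` E" unfolding E_def using rx by blast
  next
    assume "y \<in> red ` E"
    then obtain x where x: "x \<in> E" "y = red x" by blast
    have xA: "x $ i \<in> Ar U" for i using EA x by blast
    have "x \<in> cl f True" using x unfolding E_def by blast
    then show "y \<in> K" using corr[OF fk _ xA, of True] gy x Esub Kf unfolding good_def by auto
  qed
  define ps where "ps = filter (\<lambda>e. \<not> iszero e) (fpolys f)"
  have psok: "\<forall>e\<in>set ps. pcs e \<subseteq> ocarrier RS \<and> \<not> (\<forall>y\<in>ospace RS. evalS RS e y = ozero RS)"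
    using fk unfolding ps_def fok_def iszero_def by auto
  have dim: "dim_le RS ((red ` E - K) \<union> (K - red ` E)) (CARD('n) - 1)"
    unfolding dim_le_def
  proof (intro allI impI notI)
    fix d \<sigma> assume H: "CARD('n) - 1 < d \<and> inj_on \<sigma> {..<d}"
      and P: "proj_has_interior RS ((red ` E - K) \<union> (K - red ` E)) d \<sigma>"
    have "card {..<d} \<le> card (UNIV :: 'n set)"
      using H by (intro card_inj_on_le) auto
    then have "d \<le> CARD('n)" by simp
    moreover have "0 < CARD('n)" by simp
    ultimately have dn: "d = CARD('n)" using H by linarith
    have surj: "\<sigma> ` {..<d} = UNIV"
    proof (rule card_subset_eq)
      show "card (\<sigma> ` {..<d}) = card (UNIV :: 'n set)" using H dn card_image[of \<sigma> "{..<d}"] by simp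
    qed auto
    define \<tau> where "\<tau> = inv_into {..<d} \<sigma>"
    have t1: "\<tau> i < d" "\<sigma> (\<tau> i) = i" for i
      unfolding \<tau>_def using surj inv_into_into[of i \<sigma> "{..<d}"] f_inv_into_f[of i \<sigma> "{..<d}"] by auto
    have t2: "\<tau> (\<sigma> j) = j" if "j < d" for j
      unfolding \<tau>_def using H that by (simp add: inv_into_f_f)
    obtain a b where ab: "\<forall>j<d. a j \<in> ocarrier RS \<and> b j \<in> ocarrier RS \<and> oless RS (a j) (b j)"
      and Pab: "\<forall>y. (\<forall>j<d. y j \<in> ocarrier RS \<and> oless RS (a j) (y j) \<and> oless RS (y j) (b j)) \<longrightarrow>
              (\<exists>x \<in> (red ` E - K) \<union> (K - red ` E). \<forall>j<d. x $ (\<sigma> j) = y j)"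
      using P unfolding proj_has_interior_def by blast
    have abt: "\<forall>i. a (\<tau> i) \<in> ocarrier RS \<and> b (\<tau> i) \<in> ocarrier RS \<and> oless RS (a (\<tau> i)) (b (\<tau> i))"
    proof
      fix i show "a (\<tau> i) \<in> ocarrier RS \<and> b (\<tau> i) \<in> ocarrier RS \<and> oless RS (a (\<tau> i)) (b (\<tau> i))"
        using ab t1(1)[of i] by simp
    qed
    from cover[OF psok abt] obtain v where v: "v \<in> ospace RS" "\<forall>i. oless RS (a (\<tau> i)) (v $ i) \<and> oless RS (v $ i) (b (\<tau> i))"
      "\<forall>e\<in>set ps. evalS RS e v \<noteq> ozero RS" by blast
    have gv: "good v" using v(3) unfolding good_def ps_def by auto
    have "\<forall>j<d. v $ (\<sigma> j) \<in> ocarrier RS \<and> oless RS (a j) (v $ (\<sigma> j)) \<and> oless RS (v $ (\<sigma> j)) (b j)"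
    proof (intro allI impI)
      fix j assume j: "j < d"
      have "\<tau> (\<sigma> j) = j" by (rule t2[OF j])
      then show "v $ (\<sigma> j) \<in> ocarrier RS \<and> oless RS (a j) (v $ (\<sigma> j)) \<and> oless RS (v $ (\<sigma> j)) (b j)"
        using v(2)[rule_format, of "\<sigma> j"] ospaceR[OF v(1), of "\<sigma> j"] by simp
    qed
    then have "\<exists>x \<in> (red ` E - K) \<union> (K - red ` E). \<forall>j<d. x $ (\<sigma> j) = v $ (\<sigma> j)"
      using Pab by (rule_tac allE[OF Pab, of "\<lambda>j. v $ (\<sigma> j)"]) blast
    then obtain x where x: "x \<in> (red ` E - K) \<union> (K - red ` E)" "\<forall>j<d. x $ (\<sigma> j) = v $ (\<sigma> j)"
      by (elim bexE) blast
    have "x = v" unfolding vec_eq_iff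
    proof
      fix i
      have "x $ (\<sigma> (\<tau> i)) = v $ (\<sigma> (\<tau> i))" using x(2) t1(1) by blast
      then show "x $ i = v $ i" using t1(2) by simp
    qed
    then have "v \<in> (red ` E - K) \<union> (K - red ` E)" using x(1) by simp
    moreover have "v \<in> K \<longleftrightarrow> v \<in> red ` E" by (rule sd[OF v(1) gv])
    ultimately show False by blast
  qed
  show ?thesis using Ecomp EA dim unfolding reduce_red by blast
qed

end

theorem corollary3p7:
  fixes U :: "complex set set" and K :: "(rfield ^ 'n) set"
  assumes "is_ultrafilter U" and "nonprincipal U" and "converges_to_0 U"
    and "def_compact (R_str U) K"
  shows "\<exists>E :: (hstar ^ 'n) set. def_compact (hstar_str U) E \<and>
           E \<subseteq> {x. \<forall>i. x $ i \<in> Ar U} \<and>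
           dim_le (R_str U) ((reduce_set U E - K) \<union> (K - reduce_set U E)) (CARD('n) - 1)"
proof -
  interpret UF U using assms(1-3) by unfold_locales
  show ?thesis using main[OF assms(4)] .
qed


end
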